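(* Let $U=\{|z|<1/2\}$, $U^*=U\setminus\{0\}$, and let $u$ be a smooth real function on $U^*$ satisfying $\Delta u=e^{2u}$ on $U^*$ (where $\Delta=4\frac{\partial^2}{\partial z\partial\bar z}$), such that $v:=u+\ln|z|+\ln(-\ln|z|)$ extends to a continuous function on $U$. Let $\mathbf D=\{|z|<1/5\}$. Then $\int_{\mathbf D}|\nabla v|^2\,dx\,dy<+\infty$; more precisely, the pointwise gradient of $v$ on $\mathbf D\setminus\{0\}$ is square integrable and coincides, as a distribution on $\mathbf D$, with the distributional gradient of the continuous function $v$.
   Context: Integrals are with respect to Lebesgue measure on $\mathbb C\cong\mathbb R^2$, $z=x+iy$. *)

theory Defs
  imports "HOL-Analysis.Analysis"
begin

definition px :: "(complex \<Rightarrow> real) \<Rightarrow> complex \<Rightarrow> real" where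
  "px f z = deriv (\<lambda>t::real. f (z + complex_of_real t)) 0"

definition py :: "(complex \<Rightarrow> real) \<Rightarrow> complex \<Rightarrow> real" where
  "py f z = deriv (\<lambda>t::real. f (z + \<i> * complex_of_real t)) 0"

text \<open>Iterated partial derivative: True = d/dx, False = d/dy (applied from the head).\<close>
fun pd_iter :: "bool list \<Rightarrow> (complex \<Rightarrow> real) \<Rightarrow> complex \<Rightarrow> real" where
  "pd_iter [] f = f"
| "pd_iter (b # bs) f = (if b then px (pd_iter bs f) else py (pd_iter bs f))"

text \<open>C-infinity smoothness on a set: every iterated partial derivative is
  (real-Frechet) differentiable on S.\<close>
definition smooth_on :: "complex set \<Rightarrow> (complex \<Rightarrow> real) \<Rightarrow> bool" where
  "smooth_on S f \<longleftrightarrow> (\<forall>ds. pd_iter ds f differentiable_on S)"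

text \<open>Laplacian  \<Delta> = 4 d^2/dz dzbar = d^2/dx^2 + d^2/dy^2.\<close>
definition laplacian :: "(complex \<Rightarrow> real) \<Rightarrow> complex \<Rightarrow> real" where
  "laplacian f z = px (px f) z + py (py f) z"

definition test_fun :: "complex set \<Rightarrow> (complex \<Rightarrow> real) \<Rightarrow> bool" where
  "test_fun D \<phi> \<longleftrightarrow> smooth_on UNIV \<phi> \<and> compact (closure {z. \<phi> z \<noteq> 0})
      \<and> closure {z. \<phi> z \<noteq> 0} \<subseteq> D"

end

theory Submission
  imports Defs
begin


lemma Complex_meas[measurable]: "(\<lambda>(x,y). Complex x y) \<in> borel_measurable (lborel \<Otimes>\<^sub>M lborel)"
proof -
  have "(\<lambda>p::real\<times>real. complex_of_real (fst p) + \<i> * complex_of_real (snd p)) \<in> borel_measurable (lborel \<Otimes>\<^sub>M lborel)"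
    by measurable
  moreover have "(\<lambda>(x,y). Complex x y) = (\<lambda>p::real\<times>real. complex_of_real (fst p) + \<i> * complex_of_real (snd p))"
    by (auto simp: Complex_eq)
  ultimately show ?thesis by simp
qed

lemma lborel_complex_distr:
  "distr (lborel \<Otimes>\<^sub>M lborel) borel (\<lambda>(x,y). Complex x y) = (lborel :: complex measure)"
proof (rule lborel_eqI[symmetric])
  fix l u :: complex
  assume lu: "\<And>b. b \<in> Basis \<Longrightarrow> l \<bullet> b \<le> u \<bullet> b"
  have le: "Re l \<le> Re u" "Im l \<le> Im u" using lu[of 1] lu[of \<i>] by (auto simp: Basis_complex_def)
  have pre: "(\<lambda>(x,y). Complex x y) -` box l u \<inter> space (lborel \<Otimes>\<^sub>M lborel)
        = box (Re l) (Re u) \<times> box (Im l) (Im u)"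
    by (auto simp: box_def Basis_complex_def space_pair_measure)
  show "emeasure (distr (lborel \<Otimes>\<^sub>M lborel) borel (\<lambda>(x,y). Complex x y)) (box l u)
        = (\<Prod>b\<in>Basis. (u - l) \<bullet> b)"
    using le
    by (simp add: emeasure_distr pre lborel.emeasure_pair_measure_Times Basis_complex_def
                  ennreal_mult[symmetric])
qed simp

lemma complex_fubini_zero_x:
  fixes F :: "complex \<Rightarrow> real"
  assumes int: "integrable lborel F"
  and line: "\<And>y. y \<noteq> 0 \<Longrightarrow> ((\<lambda>t. F (Complex t y)) has_integral 0) UNIV"
  shows "integral\<^sup>L lborel F = 0"
proof -
  have Fm[measurable]: "F \<in> borel_measurable borel" using int by auto
  have int2: "integrable (lborel \<Otimes>\<^sub>M lborel) (\<lambda>(x,y). F (Complex x y))"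
    using int unfolding lborel_complex_distr[symmetric]
    by (subst (asm) integrable_distr_eq) (auto simp: split_beta')
  have "integral\<^sup>L lborel F = integral\<^sup>L (lborel \<Otimes>\<^sub>M lborel) (\<lambda>(x,y). F (Complex x y))"
    unfolding lborel_complex_distr[symmetric]
    by (subst integral_distr) (auto simp: split_beta')
  also have "\<dots> = (\<integral>y. (\<integral>x. F (Complex x y) \<partial>lborel) \<partial>lborel)"
    using lborel_pair.integral_snd[of "\<lambda>x y. F (Complex x y)"] int2 by simp
  also have "\<dots> = 0"
  proof (rule integral_eq_zero_AE)
    show "AE y in lborel. (\<integral>x. F (Complex x y) \<partial>lborel) = 0"
      using lborel_pair.AE_integrable_snd[of "\<lambda>x y. F (Complex x y)", OF int2] AE_lborel_singleton[of 0]
    proof eventually_elim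
      case (elim y)
      then show ?case using has_integral_unique[OF has_integral_integral_lborel line] by auto
    qed
  qed
  finally show ?thesis by simp
qed

lemma complex_fubini_zero_y:
  fixes F :: "complex \<Rightarrow> real"
  assumes int: "integrable lborel F"
  and line: "\<And>x. x \<noteq> 0 \<Longrightarrow> ((\<lambda>t. F (Complex x t)) has_integral 0) UNIV"
  shows "integral\<^sup>L lborel F = 0"
proof -
  have Fm[measurable]: "F \<in> borel_measurable borel" using int by auto
  have int2: "integrable (lborel \<Otimes>\<^sub>M lborel) (\<lambda>(x,y). F (Complex x y))"
    using int unfolding lborel_complex_distr[symmetric]
    by (subst (asm) integrable_distr_eq) (auto simp: split_beta')
  have "integral\<^sup>L lborel F = integral\<^sup>L (lborel \<Otimes>\<^sub>M lborel) (\<lambda>(x,y). F (Complex x y))"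
    unfolding lborel_complex_distr[symmetric]
    by (subst integral_distr) (auto simp: split_beta')
  also have "\<dots> = (\<integral>x. (\<integral>y. F (Complex x y) \<partial>lborel) \<partial>lborel)"
    using lborel_pair.integral_fst[of "\<lambda>x y. F (Complex x y)"] int2 by simp
  also have "\<dots> = 0"
  proof (rule integral_eq_zero_AE)
    show "AE x in lborel. (\<integral>y. F (Complex x y) \<partial>lborel) = 0"
      using lborel_pair.AE_integrable_fst[of "\<lambda>x y. F (Complex x y)", OF int2] AE_lborel_singleton[of 0]
    proof eventually_elim
      case (elim x)
      then show ?case using has_integral_unique[OF has_integral_integral_lborel line] by auto
    qed
  qed
  finally show ?thesis by simp
qed


definition kk :: "real \<Rightarrow> real" where "kk s = 1/s + 2/(s * ln s)"
definition kk' :: "real \<Rightarrow> real" where "kk' s = -1/s\<^sup>2 - 2*(ln s + 1)/(s * ln s)\<^sup>2"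
definition hf :: "real \<Rightarrow> real" where "hf s = ln s / 2 + ln (- ln s / 2)"

lemma hf_deriv: assumes "0 < s" "s < 1" shows "(hf has_real_derivative kk s / 2) (at s)"
proof -
  have l: "ln s < 0" using assms by simp
  have "((\<lambda>s. ln s / 2 + ln (- ln s / 2)) has_real_derivative (1/s)/2 + (1/(- ln s / 2)) * (-(1/s)/2)) (at s)"
    using assms l by (auto intro!: derivative_eq_intros)
  then show ?thesis unfolding hf_def[abs_def]
    by (rule DERIV_cong) (use assms l in \<open>simp add: kk_def field_simps\<close>)
qed

lemma kk_deriv: assumes "0 < s" "s < 1" shows "(kk has_real_derivative kk' s) (at s)"
proof -
  have l: "ln s < 0" using assms by simp
  have "((\<lambda>s. 1/s + 2/(s * ln s)) has_real_derivative
      (- (1 / s\<^sup>2)) + (- (2 * (1 * ln s + s * (1/s)) / (s * ln s)\<^sup>2))) (at s)"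
    using assms l by (auto intro!: derivative_eq_intros simp: power2_eq_square) (simp add: minus_divide_left)
  then show ?thesis unfolding kk_def[abs_def]
    by (rule DERIV_cong) (use assms l in \<open>simp add: kk'_def\<close>)
qed

lemma hf_line: assumes "0 < t0\<^sup>2 + c" "t0\<^sup>2 + c < 1"
  shows "((\<lambda>t. hf (t\<^sup>2 + c)) has_real_derivative t0 * kk (t0\<^sup>2 + c)) (at t0)"
proof -
  have "((\<lambda>t. hf (t\<^sup>2 + c)) has_real_derivative kk (t0\<^sup>2 + c) / 2 * (2 * t0)) (at t0)"
    by (rule DERIV_chain2[of hf _ "\<lambda>t. t\<^sup>2 + c" t0, OF hf_deriv[OF assms]]) (auto intro!: derivative_eq_intros)
  then show ?thesis by (simp add: mult.commute)
qed

lemma kk_line: assumes "0 < t0\<^sup>2 + c" "t0\<^sup>2 + c < 1"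
  shows "((\<lambda>t. t * kk (t\<^sup>2 + c)) has_real_derivative kk (t0\<^sup>2 + c) + 2 * t0\<^sup>2 * kk' (t0\<^sup>2 + c)) (at t0)"
proof -
  have "((\<lambda>t. kk (t\<^sup>2 + c)) has_real_derivative kk' (t0\<^sup>2 + c) * (2 * t0)) (at t0)"
    by (rule DERIV_chain2[of kk _ "\<lambda>t. t\<^sup>2 + c" t0, OF kk_deriv[OF assms]]) (auto intro!: derivative_eq_intros)
  then have "((\<lambda>t. t * kk (t\<^sup>2 + c)) has_real_derivative 1 * kk (t0\<^sup>2 + c) + t0 * (kk' (t0\<^sup>2 + c) * (2 * t0))) (at t0)"
    by (auto intro!: derivative_eq_intros)
  then show ?thesis by (simp add: algebra_simps power2_eq_square)
qed

lemma lap_h: assumes "0 < s" "s < 1" shows "2 * kk s + 2 * s * kk' s = -4 / (s * (ln s)\<^sup>2)"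
proof -
  have l: "ln s < 0" using assms by simp
  define L where "L = ln s"
  have L: "L \<noteq> 0" "s \<noteq> 0" using l assms by (auto simp: L_def)
  have "2 * (1/s + 2/(s * L)) + 2 * s * (-1/s\<^sup>2 - 2*(L + 1)/(s * L)\<^sup>2) = -4 / (s * L\<^sup>2)"
    using L by (simp add: field_simps power2_eq_square)
  then show ?thesis by (simp add: kk_def kk'_def L_def)
qed
lemma exp_hf: assumes "0 < s" "s < 1" shows "exp (- 2 * hf s) = 4 / (s * (ln s)\<^sup>2)"
proof -
  have l: "ln s < 0" using assms by simp
  have "exp (- 2 * hf s) = exp (- ln s) * exp (- 2 * ln (- ln s / 2))"
    unfolding hf_def by (simp add: algebra_simps exp_add[symmetric])
  also have "exp (- ln s) = 1 / s" using assms by (simp add: exp_minus inverse_eq_divide)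
  also have "exp (- 2 * ln (- ln s / 2)) = 1 / (- ln s / 2)\<^sup>2"
  proof -
    have "exp (- 2 * ln (- ln s / 2)) = inverse (exp (ln (- ln s / 2)) ^ 2)"
      by (simp add: exp_minus[symmetric] exp_of_nat_mult[symmetric])
    also have "exp (ln (- ln s / 2)) = - ln s / 2" using l by simp
    finally show ?thesis by (simp add: inverse_eq_divide)
  qed
  also have "1 / s * (1 / (- ln s / 2)\<^sup>2) = 4 / (s * (ln s)\<^sup>2)"
    using assms l by (simp add: power_divide)
  finally show ?thesis .
qed


lemma px_eq:
  assumes "((\<lambda>t. f (Complex t y)) has_real_derivative D) (at t0)"
  shows "px f (Complex t0 y) = D"
proof -
  have "((\<lambda>t. f (Complex (t + t0) y)) has_real_derivative D) (at 0)"
    using assms DERIV_shift[of "\<lambda>t. f (Complex t y)" D 0 t0] by simp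
  moreover have "(\<lambda>t. f (Complex t0 y + complex_of_real t)) = (\<lambda>t. f (Complex (t + t0) y))"
    by (intro ext arg_cong[where f=f]) (simp add: complex_eq_iff)
  ultimately show ?thesis unfolding px_def by (simp add: DERIV_imp_deriv)
qed

lemma py_eq:
  assumes "((\<lambda>t. f (Complex x t)) has_real_derivative D) (at t0)"
  shows "py f (Complex x t0) = D"
proof -
  have "((\<lambda>t. f (Complex x (t + t0))) has_real_derivative D) (at 0)"
    using assms DERIV_shift[of "\<lambda>t. f (Complex x t)" D 0 t0] by simp
  moreover have "(\<lambda>t. f (Complex x t0 + \<i> * complex_of_real t)) = (\<lambda>t. f (Complex x (t + t0)))"
    by (intro ext arg_cong[where f=f]) (simp add: complex_eq_iff)
  ultimately show ?thesis unfolding py_def by (simp add: DERIV_imp_deriv)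
qed

lemma line_x_frechet:
  fixes f :: "complex \<Rightarrow> real"
  assumes "f differentiable (at (Complex t0 y))"
  shows "\<exists>D. ((\<lambda>t. f (Complex t y)) has_real_derivative D) (at t0)"
proof -
  obtain L where L: "(f has_derivative L) (at (Complex t0 y))"
    using assms unfolding differentiable_def by blast
  have lin: "linear L" using L has_derivative_linear by blast
  have g: "((\<lambda>t. Complex t y) has_derivative (\<lambda>h. complex_of_real h)) (at t0)"
  proof -
    have "((\<lambda>t. complex_of_real t + \<i> * complex_of_real y) has_derivative (\<lambda>h. complex_of_real h)) (at t0)"
      by (auto intro!: derivative_eq_intros)
    moreover have "(\<lambda>t. complex_of_real t + \<i> * complex_of_real y) = (\<lambda>t. Complex t y)"
      by (auto simp: complex_eq_iff)
    ultimately show ?thesis by simp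
  qed
  have "((\<lambda>t. f (Complex t y)) has_derivative (\<lambda>h. L (complex_of_real h))) (at t0)"
    using has_derivative_compose[OF g L] by (simp add: o_def)
  moreover have "(\<lambda>h. L (complex_of_real h)) = (\<lambda>h. L 1 * h)"
  proof
    fix h :: real
    have "L (complex_of_real h) = L (h *\<^sub>R 1)" by (simp add: scaleR_conv_of_real)
    also have "\<dots> = h *\<^sub>R L 1" using lin by (simp add: linear_scale)
    finally show "L (complex_of_real h) = L 1 * h" by simp
  qed
  ultimately show ?thesis unfolding has_field_derivative_def by auto
qed

lemma line_y_frechet:
  fixes f :: "complex \<Rightarrow> real"
  assumes "f differentiable (at (Complex x t0))"
  shows "\<exists>D. ((\<lambda>t. f (Complex x t)) has_real_derivative D) (at t0)"
proof -
  obtain L where L: "(f has_derivative L) (at (Complex x t0))"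
    using assms unfolding differentiable_def by blast
  have lin: "linear L" using L has_derivative_linear by blast
  have g: "((\<lambda>t. Complex x t) has_derivative (\<lambda>h. \<i> * complex_of_real h)) (at t0)"
  proof -
    have "((\<lambda>t. complex_of_real x + \<i> * complex_of_real t) has_derivative (\<lambda>h. \<i> * complex_of_real h)) (at t0)"
      by (auto intro!: derivative_eq_intros)
    moreover have "(\<lambda>t. complex_of_real x + \<i> * complex_of_real t) = (\<lambda>t. Complex x t)"
      by (auto simp: complex_eq_iff)
    ultimately show ?thesis by simp
  qed
  have "((\<lambda>t. f (Complex x t)) has_derivative (\<lambda>h. L (\<i> * complex_of_real h))) (at t0)"
    using has_derivative_compose[OF g L] by (simp add: o_def)
  moreover have "(\<lambda>h. L (\<i> * complex_of_real h)) = (\<lambda>h. L \<i> * h)"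
  proof
    fix h :: real
    have "L (\<i> * complex_of_real h) = L (h *\<^sub>R \<i>)" by (simp add: scaleR_conv_of_real mult.commute)
    also have "\<dots> = h *\<^sub>R L \<i>" using lin by (simp add: linear_scale)
    finally show "L (\<i> * complex_of_real h) = L \<i> * h" by simp
  qed
  ultimately show ?thesis unfolding has_field_derivative_def by auto
qed

lemma px_line:
  fixes f :: "complex \<Rightarrow> real"
  assumes "f differentiable (at (Complex t0 y))"
  shows "((\<lambda>t. f (Complex t y)) has_real_derivative px f (Complex t0 y)) (at t0)"
  using line_x_frechet[OF assms] px_eq by metis

lemma py_line:
  fixes f :: "complex \<Rightarrow> real"
  assumes "f differentiable (at (Complex x t0))"
  shows "((\<lambda>t. f (Complex x t)) has_real_derivative py f (Complex x t0)) (at t0)"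
  using line_y_frechet[OF assms] py_eq by metis


definition sq :: "complex \<Rightarrow> real" where "sq z = (Re z)\<^sup>2 + (Im z)\<^sup>2"

abbreviation PP :: "complex set" where "PP \<equiv> ball 0 (1/2) - {0}"

lemma open_PP: "open PP" by auto

lemma sq_Complex[simp]: "sq (Complex a b) = a\<^sup>2 + b\<^sup>2" by (simp add: sq_def)

lemma sq_norm: "sq z = (norm z)\<^sup>2" by (simp add: sq_def cmod_def)

lemma PP_sq: "z \<in> PP \<Longrightarrow> 0 < sq z \<and> sq z < 1/4"
proof -
  assume z: "z \<in> PP"
  then have "0 < norm z" "norm z < 1/2" by auto
  then have "0 < (norm z)\<^sup>2" "(norm z)\<^sup>2 < (1/2)\<^sup>2"
    by (auto intro!: power_strict_mono)
  then show ?thesis by (simp add: sq_norm power2_eq_square)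
qed

lemma open_line_x: "open S \<Longrightarrow> open {t. Complex t b \<in> S}"
proof -
  assume S: "open S"
  have c: "continuous_on UNIV (\<lambda>t. Complex t b)"
  proof -
    have "continuous_on UNIV (\<lambda>t. complex_of_real t + \<i> * complex_of_real b)"
      by (intro continuous_intros)
    moreover have "(\<lambda>t. complex_of_real t + \<i> * complex_of_real b) = (\<lambda>t. Complex t b)"
      by (auto simp: complex_eq_iff)
    ultimately show ?thesis by metis
  qed
  have "open ((\<lambda>t. Complex t b) -` S)" by (rule open_vimage[OF S c])
  then show ?thesis by (simp add: vimage_def)
qed

lemma open_line_y: "open S \<Longrightarrow> open {t. Complex a t \<in> S}"
proof -
  assume S: "open S"
  have c: "continuous_on UNIV (\<lambda>t. Complex a t)"
  proof -
    have "continuous_on UNIV (\<lambda>t. complex_of_real a + \<i> * complex_of_real t)"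
      by (intro continuous_intros)
    moreover have "(\<lambda>t. complex_of_real a + \<i> * complex_of_real t) = (\<lambda>t. Complex a t)"
      by (auto simp: complex_eq_iff)
    ultimately show ?thesis by metis
  qed
  have "open ((\<lambda>t. Complex a t) -` S)" by (rule open_vimage[OF S c])
  then show ?thesis by (simp add: vimage_def)
qed

locale setting =
  fixes u v :: "complex \<Rightarrow> real"
  assumes smooth: "smooth_on (ball 0 (1/2) - {0}) u"
    and eq: "\<And>z. z \<in> ball 0 (1/2) - {0} \<Longrightarrow> laplacian u z = exp (2 * u z)"
    and v_def: "\<And>z. z \<in> ball 0 (1/2) - {0} \<Longrightarrow>
                  v z = u z + ln (norm z) + ln (- ln (norm z))"
    and v_cont: "continuous_on (ball 0 (1/2)) v"
begin

definition vx where "vx z = px u z + Re z * kk (sq z)"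
definition vy where "vy z = py u z + Im z * kk (sq z)"
definition vxx where "vxx z = px (px u) z + kk (sq z) + 2 * (Re z)\<^sup>2 * kk' (sq z)"
definition vyy where "vyy z = py (py u) z + kk (sq z) + 2 * (Im z)\<^sup>2 * kk' (sq z)"

lemma diff_u: "z \<in> PP \<Longrightarrow> pd_iter ds u differentiable (at z)"
  using smooth open_PP unfolding smooth_on_def by (auto simp: differentiable_on_eq_differentiable_at)

lemma v_hf: "z \<in> PP \<Longrightarrow> v z = u z + hf (sq z)"
proof -
  assume z: "z \<in> PP"
  then have "0 < sq z" using PP_sq by auto
  have e: "ln (norm z) = ln (sq z) / 2"
    using z by (simp add: sq_norm ln_sqrt[symmetric])
  show ?thesis using v_def[OF z] by (simp add: e hf_def)
qed

lemma v_line_x: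
  assumes z: "Complex a b \<in> PP"
  shows "((\<lambda>t. v (Complex t b)) has_real_derivative vx (Complex a b)) (at a)"
proof -
  have s: "0 < a\<^sup>2 + b\<^sup>2" "a\<^sup>2 + b\<^sup>2 < 1" using PP_sq[OF z] by auto
  have "((\<lambda>t. u (Complex t b) + hf (t\<^sup>2 + b\<^sup>2)) has_real_derivative
        px u (Complex a b) + a * kk (a\<^sup>2 + b\<^sup>2)) (at a)"
    using px_line[OF diff_u[OF z, of "[]", simplified]] hf_line[OF s]
    by (intro derivative_intros) auto
  then have "((\<lambda>t. v (Complex t b)) has_real_derivative
        px u (Complex a b) + a * kk (a\<^sup>2 + b\<^sup>2)) (at a)"
    by (rule has_field_derivative_transform_within_open[OF _ open_line_x[OF open_PP]])
       (use z in \<open>auto simp: v_hf\<close>)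
  then show ?thesis by (simp add: vx_def)
qed

lemma v_line_y:
  assumes z: "Complex a b \<in> PP"
  shows "((\<lambda>t. v (Complex a t)) has_real_derivative vy (Complex a b)) (at b)"
proof -
  have s: "0 < b\<^sup>2 + a\<^sup>2" "b\<^sup>2 + a\<^sup>2 < 1" using PP_sq[OF z] by auto
  have "((\<lambda>t. u (Complex a t) + hf (t\<^sup>2 + a\<^sup>2)) has_real_derivative
        py u (Complex a b) + b * kk (b\<^sup>2 + a\<^sup>2)) (at b)"
    using py_line[OF diff_u[OF z, of "[]", simplified]] hf_line[OF s]
    by (intro derivative_intros) auto
  then have "((\<lambda>t. v (Complex a t)) has_real_derivative
        py u (Complex a b) + b * kk (b\<^sup>2 + a\<^sup>2)) (at b)"
    by (rule has_field_derivative_transform_within_open[OF _ open_line_y[OF open_PP]])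
       (use z in \<open>auto simp: v_hf add.commute\<close>)
  then show ?thesis by (simp add: vy_def add.commute)
qed

lemma px_v: "z \<in> PP \<Longrightarrow> px v z = vx z"
  using v_line_x[of "Re z" "Im z"] px_eq[of v "Im z" "vx z" "Re z"] by simp

lemma py_v: "z \<in> PP \<Longrightarrow> py v z = vy z"
  using v_line_y[of "Re z" "Im z"] py_eq[of v "Re z" "vy z" "Im z"] by simp

lemma vx_line_x:
  assumes z: "Complex a b \<in> PP"
  shows "((\<lambda>t. vx (Complex t b)) has_real_derivative vxx (Complex a b)) (at a)"
proof -
  have s: "0 < a\<^sup>2 + b\<^sup>2" "a\<^sup>2 + b\<^sup>2 < 1" using PP_sq[OF z] by auto
  have "((\<lambda>t. px u (Complex t b) + t * kk (t\<^sup>2 + b\<^sup>2)) has_real_derivative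
        px (px u) (Complex a b) + (kk (a\<^sup>2 + b\<^sup>2) + 2 * a\<^sup>2 * kk' (a\<^sup>2 + b\<^sup>2))) (at a)"
    using px_line[OF diff_u[OF z, of "[True]", simplified]] kk_line[OF s]
    by (intro derivative_intros) auto
  then show ?thesis by (simp add: vx_def vxx_def add.assoc)
qed

lemma vy_line_y:
  assumes z: "Complex a b \<in> PP"
  shows "((\<lambda>t. vy (Complex a t)) has_real_derivative vyy (Complex a b)) (at b)"
proof -
  have s: "0 < b\<^sup>2 + a\<^sup>2" "b\<^sup>2 + a\<^sup>2 < 1" using PP_sq[OF z] by auto
  have "((\<lambda>t. py u (Complex a t) + t * kk (t\<^sup>2 + a\<^sup>2)) has_real_derivative
        py (py u) (Complex a b) + (kk (b\<^sup>2 + a\<^sup>2) + 2 * b\<^sup>2 * kk' (b\<^sup>2 + a\<^sup>2))) (at b)"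
    using py_line[OF diff_u[OF z, of "[False]", simplified]] kk_line[OF s]
    by (intro derivative_intros) auto
  then show ?thesis by (simp add: vy_def vyy_def add.assoc add.commute)
qed

lemma lap_v: assumes z: "z \<in> PP"
  shows "vxx z + vyy z = 4 / (sq z * (ln (sq z))\<^sup>2) * (exp (2 * v z) - 1)"
proof -
  have s: "0 < sq z" "sq z < 1" using PP_sq[OF z] by auto
  have "vxx z + vyy z = laplacian u z + (2 * kk (sq z) + 2 * sq z * kk' (sq z))"
    by (simp add: vxx_def vyy_def laplacian_def sq_def algebra_simps)
  also have "\<dots> = exp (2 * u z) - 4 / (sq z * (ln (sq z))\<^sup>2)"
    using eq[OF z] lap_h[OF s] by simp
  also have "exp (2 * u z) = exp (2 * v z) * exp (- 2 * hf (sq z))"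
    using v_hf[OF z] by (simp add: exp_add[symmetric] algebra_simps)
  also have "\<dots> = exp (2 * v z) * (4 / (sq z * (ln (sq z))\<^sup>2))"
    using exp_hf[OF s] by simp
  finally have h: "vxx z + vyy z = exp (2 * v z) * (4 / (sq z * (ln (sq z))\<^sup>2)) - 4 / (sq z * (ln (sq z))\<^sup>2)" .
  show ?thesis by (simp add: h right_diff_distrib mult.commute diff_divide_distrib)
qed

lemma lap_v_sign: assumes z: "z \<in> PP" shows "0 \<le> v z * (vxx z + vyy z)"
proof -
  have s: "0 < sq z" using PP_sq[OF z] by auto
  have c: "0 \<le> 4 / (sq z * (ln (sq z))\<^sup>2)" using s by simp
  have "0 \<le> v z * (exp (2 * v z) - 1)"
  proof (cases "v z \<ge> 0")
    case True then show ?thesis by simp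
  next
    case False then show ?thesis by (simp add: mult_nonpos_nonpos)
  qed
  then show ?thesis unfolding lap_v[OF z]
    using c by (metis mult.left_commute mult_nonneg_nonneg)
qed

end


definition Gc :: "real \<Rightarrow> real \<Rightarrow> real" where
  "Gc e s = max 0 (min 1 (min ((s - e)/e) ((1/16 - s)/(1/16 - 1/25))))"
definition Gd :: "real \<Rightarrow> real \<Rightarrow> real" where
  "Gd e s = (if e < s \<and> s < 2*e then 1/e else if 1/25 < s \<and> s < 1/16 then -1/(1/16-1/25) else 0)"

lemma mmA: "(a::real) \<le> 0 \<Longrightarrow> max 0 (min 1 (min a b)) = 0" by (simp add: max_def min_def)
lemma mmB: "(b::real) \<le> 0 \<Longrightarrow> max 0 (min 1 (min a b)) = 0" by (simp add: max_def min_def)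
lemma mmC: "1 \<le> (a::real) \<Longrightarrow> 1 \<le> b \<Longrightarrow> max 0 (min 1 (min a b)) = 1" by (simp add: max_def min_def)
lemma mmD: "0 \<le> (a::real) \<Longrightarrow> a \<le> 1 \<Longrightarrow> 1 \<le> b \<Longrightarrow> max 0 (min 1 (min a b)) = a" by (simp add: max_def min_def)
lemma mmE: "0 \<le> (b::real) \<Longrightarrow> b \<le> 1 \<Longrightarrow> 1 \<le> a \<Longrightarrow> max 0 (min 1 (min a b)) = b" by (simp add: max_def min_def)
lemma mmF: "0 \<le> max 0 (min 1 (x::real))" "max 0 (min 1 (x::real)) \<le> 1" by (simp_all add: max_def min_def)

context fixes e :: real assumes e0: "0 < e" and e1: "2*e < 1/25"
begin

lemma Gc_zero1: "s \<le> e \<Longrightarrow> Gc e s = 0"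
  unfolding Gc_def by (rule mmA) (use e0 in \<open>simp add: divide_le_0_iff\<close>)

lemma Gc_zero2: "1/16 \<le> s \<Longrightarrow> Gc e s = 0"
  unfolding Gc_def by (rule mmB) (simp add: divide_le_0_iff)

lemma Gc_one: "2*e \<le> s \<Longrightarrow> s \<le> 1/25 \<Longrightarrow> Gc e s = 1"
  unfolding Gc_def by (rule mmC) (use e0 in \<open>simp_all add: le_divide_eq\<close>)

lemma Gc_ramp1: "e \<le> s \<Longrightarrow> s \<le> 2*e \<Longrightarrow> Gc e s = (s - e)/e"
  unfolding Gc_def by (rule mmD) (use e0 e1 in \<open>simp_all add: le_divide_eq divide_le_eq\<close>)

lemma Gc_ramp2: "1/25 \<le> s \<Longrightarrow> s \<le> 1/16 \<Longrightarrow> Gc e s = (1/16 - s)/(1/16 - 1/25)"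
  unfolding Gc_def by (rule mmE) (use e0 e1 in \<open>simp_all add: le_divide_eq divide_le_eq\<close>)

lemma Gc_bounds: "0 \<le> Gc e s" "Gc e s \<le> 1"
  unfolding Gc_def by (rule mmF)+

lemma Gc_cont: "continuous_on UNIV (Gc e)"
  unfolding Gc_def[abs_def] using e0 by (intro continuous_intros) auto

lemma Gd_zero: "s \<le> e \<or> 1/16 \<le> s \<Longrightarrow> Gd e s = 0"
  using e0 e1 by (auto simp: Gd_def)

lemma Gd_bound: "4 * s * (Gd e s)\<^sup>2 \<le> (if s \<le> 2*e then 8/e else 0) + (if s \<le> 1/16 then 40000/81 else 0)"
proof -
  have "4 * s * (Gd e s)\<^sup>2 \<le> 8/e" if "e < s" "s < 2*e"
  proof -
    have "4 * s * (Gd e s)\<^sup>2 = 4 * s / e\<^sup>2" using that by (simp add: Gd_def power_divide)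
    also have "\<dots> \<le> 4 * (2*e) / e\<^sup>2" using that e0 by (intro divide_right_mono) auto
    also have "\<dots> = 8 / e" using e0 by (simp add: power2_eq_square field_simps)
    finally show ?thesis .
  qed
  moreover have "4 * s * (Gd e s)\<^sup>2 \<le> 40000/81" if "1/25 < s" "s < 1/16" "\<not> (e < s \<and> s < 2*e)"
  proof -
    have "Gd e s = -1/(1/16-1/25)" using that by (auto simp: Gd_def)
    then have "4 * s * (Gd e s)\<^sup>2 = 4 * s * (400/9)\<^sup>2" by (simp add: power2_eq_square)
    also have "\<dots> \<le> 4 * (1/16) * (400/9)\<^sup>2" using that by (intro mult_right_mono) auto
    finally show ?thesis by (simp add: power2_eq_square)
  qed
  moreover have "Gd e s = 0" if "\<not> (e < s \<and> s < 2*e)" "\<not> (1/25 < s \<and> s < 1/16)"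
    using that by (auto simp: Gd_def)
  ultimately show ?thesis using e0 e1
    by (cases "e < s \<and> s < 2*e"; cases "1/25 < s \<and> s < 1/16") auto
qed

lemma Gc_deriv: assumes "s \<notin> {e, 2*e, 1/25, 1/16}" shows "(Gc e has_real_derivative Gd e s) (at s)"
proof -
  consider "s < e" | "e < s" "s < 2*e" | "2*e < s" "s < 1/25" | "1/25 < s" "s < 1/16" | "1/16 < s"
    using assms by fastforce
  then show ?thesis
  proof cases
    case 1
    have "((\<lambda>_. 0) has_real_derivative 0) (at s)" by simp
    then have "(Gc e has_real_derivative 0) (at s)"
      by (rule has_field_derivative_transform_within_open[where S="{..<e}"])
         (use 1 e0 e1 in \<open>auto simp: Gc_zero1\<close>)
    moreover have "Gd e s = 0" using 1 e0 e1 by (auto simp: Gd_def)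
    ultimately show ?thesis by simp
  next
    case 2
    have "((\<lambda>s. (s - e)/e) has_real_derivative 1/e) (at s)" using e0 by (auto intro!: derivative_eq_intros)
    then have "(Gc e has_real_derivative 1/e) (at s)"
      by (rule has_field_derivative_transform_within_open[where S="{e<..<2*e}"])
         (use 2 e0 e1 in \<open>auto simp: Gc_ramp1\<close>)
    moreover have "Gd e s = 1/e" using 2 e0 e1 by (auto simp: Gd_def)
    ultimately show ?thesis by simp
  next
    case 3
    have "((\<lambda>_. 1) has_real_derivative 0) (at s)" by simp
    then have "(Gc e has_real_derivative 0) (at s)"
      by (rule has_field_derivative_transform_within_open[where S="{2*e<..<1/25}"])
         (use 3 e0 e1 in \<open>auto simp: Gc_one\<close>)
    moreover have "Gd e s = 0" using 3 e0 e1 by (auto simp: Gd_def)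
    ultimately show ?thesis by simp
  next
    case 4
    have "((\<lambda>s. (1/16 - s)/(1/16 - 1/25)) has_real_derivative -1/(1/16-1/25)) (at s)"
      by (auto intro!: derivative_eq_intros)
    then have "(Gc e has_real_derivative -1/(1/16-1/25)) (at s)"
      by (rule has_field_derivative_transform_within_open[where S="{1/25<..<1/16}"])
         (use 4 e0 e1 in \<open>auto simp: Gc_ramp2\<close>)
    moreover have "Gd e s = -1/(1/16-1/25)" using 4 e0 e1 by (auto simp: Gd_def)
    ultimately show ?thesis by simp
  next
    case 5
    have "((\<lambda>_. 0) has_real_derivative 0) (at s)" by simp
    then have "(Gc e has_real_derivative 0) (at s)"
      by (rule has_field_derivative_transform_within_open[where S="{1/16<..}"])
         (use 5 e0 e1 in \<open>auto simp: Gc_zero2\<close>)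
    moreover have "Gd e s = 0" using 5 e0 e1 by (auto simp: Gd_def)
    ultimately show ?thesis by simp
  qed
qed

end


lemma ftc_line:
  fixes W W' :: "real \<Rightarrow> real"
  assumes "finite S" "continuous_on {-1..1} W" "W (-1) = 0" "W 1 = 0"
    "\<And>t. t \<in> {-1<..<1} - S \<Longrightarrow> (W has_real_derivative W' t) (at t)"
    "\<And>t. t \<notin> {-1<..<1} \<Longrightarrow> W' t = 0"
  shows "(W' has_integral 0) UNIV"
proof -
  have "(W' has_integral (W 1 - W (-1))) {-1..1}"
    using assms(1,2,5)
    by (intro fundamental_theorem_of_calculus_interior_strong[where S=S])
       (auto simp: has_real_derivative_iff_has_vector_derivative[symmetric])
  then have "(W' has_integral 0) {-1..1}" using assms(3,4) by simp
  then show ?thesis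
    by (rule has_integral_on_superset) (use assms(6) in auto)
qed

lemma finite_sq_line: "finite C \<Longrightarrow> finite {t::real. t\<^sup>2 + b\<^sup>2 \<in> C}"
proof -
  assume C: "finite C"
  have "{t::real. t\<^sup>2 + b\<^sup>2 \<in> C} \<subseteq> (\<Union>c\<in>C. {sqrt (c - b\<^sup>2), - sqrt (c - b\<^sup>2)})"
  proof
    fix t :: real assume "t \<in> {t. t\<^sup>2 + b\<^sup>2 \<in> C}"
    then have "t\<^sup>2 + b\<^sup>2 \<in> C" by simp
    moreover have "t = sqrt (t\<^sup>2) \<or> t = - sqrt (t\<^sup>2)" by (cases "t \<ge> 0") auto
    ultimately show "t \<in> (\<Union>c\<in>C. {sqrt (c - b\<^sup>2), - sqrt (c - b\<^sup>2)})" by force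
  qed
  moreover have "finite (\<Union>c\<in>C. {sqrt (c - b\<^sup>2), - sqrt (c - b\<^sup>2)})" using C by auto
  ultimately show ?thesis by (rule finite_subset)
qed

lemma open_sq_less: "open {z. sq z < c}"
  unfolding sq_def by (intro open_Collect_less continuous_intros)

lemma open_sq_greater: "open {z. c < sq z}"
  unfolding sq_def by (intro open_Collect_less continuous_intros)

lemma cont_sq: "continuous_on S sq"
  unfolding sq_def[abs_def] by (intro continuous_intros)

context setting
begin

lemma cont_pd: "continuous_on PP (pd_iter ds u)"
  using smooth unfolding smooth_on_def by (blast intro: differentiable_imp_continuous_on)

lemma cont_kk: "continuous_on PP (\<lambda>z. kk (sq z))"
proof -
  have "\<forall>z\<in>PP. sq z \<noteq> 0 \<and> ln (sq z) \<noteq> 0" using PP_sq by fastforce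
  then show ?thesis unfolding kk_def sq_def by (intro continuous_intros) auto
qed

lemma cont_kk': "continuous_on PP (\<lambda>z. kk' (sq z))"
proof -
  have "\<forall>z\<in>PP. sq z \<noteq> 0 \<and> ln (sq z) \<noteq> 0" using PP_sq by fastforce
  then show ?thesis unfolding kk'_def sq_def by (intro continuous_intros) auto
qed

lemma cont_vx: "continuous_on PP vx"
  unfolding vx_def[abs_def] using cont_pd[of "[True]"] cont_kk by (auto intro!: continuous_intros)

lemma cont_vy: "continuous_on PP vy"
  unfolding vy_def[abs_def] using cont_pd[of "[False]"] cont_kk by (auto intro!: continuous_intros)

lemma cont_vxx: "continuous_on PP vxx"
  unfolding vxx_def[abs_def] using cont_pd[of "[True, True]"] cont_kk cont_kk'
  by (auto intro!: continuous_intros)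

lemma cont_vyy: "continuous_on PP vyy"
  unfolding vyy_def[abs_def] using cont_pd[of "[False, False]"] cont_kk cont_kk'
  by (auto intro!: continuous_intros)

lemma cont_v: "continuous_on PP v"
  using v_cont by (rule continuous_on_subset) auto

end

definition rho :: "real \<Rightarrow> complex \<Rightarrow> real" where "rho e z = Gc e (sq z)"

context setting
begin

definition Phix where "Phix e z = vxx z * v z * (rho e z)\<^sup>2 + vx z * vx z * (rho e z)\<^sup>2
   + vx z * v z * (2 * rho e z * (Gd e (sq z) * 2 * Re z))"
definition Phiy where "Phiy e z = vyy z * v z * (rho e z)\<^sup>2 + vy z * vy z * (rho e z)\<^sup>2
   + vy z * v z * (2 * rho e z * (Gd e (sq z) * 2 * Im z))"

context fixes e :: real assumes e0: "0 < e" and e1: "2*e < 1/25"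
begin

lemma cont_cut: assumes f: "continuous_on PP f"
  shows "continuous_on UNIV (\<lambda>z. f z * (rho e z)\<^sup>2)"
proof -
  have U: "UNIV = PP \<union> ({z. sq z < e} \<union> {z. 1/16 < sq z})"
  proof -
    have "z \<in> PP" if "e \<le> sq z" "sq z \<le> 1/16" for z
    proof -
      have "z \<noteq> 0" using that e0 by (auto simp: sq_def)
      moreover have "(norm z)\<^sup>2 < (1/2)\<^sup>2" using that by (simp only: sq_norm[symmetric]) (simp add: power2_eq_square)
      then have "norm z < 1/2" by (rule power2_less_imp_less) simp
      ultimately show ?thesis by simp
    qed
    then show ?thesis by force
  qed
  have c1: "continuous_on PP (\<lambda>z. f z * (rho e z)\<^sup>2)"
    unfolding rho_def
    by (intro continuous_intros f continuous_on_compose2[OF Gc_cont[OF e0 e1] cont_sq]) auto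
  have c2: "continuous_on ({z. sq z < e} \<union> {z. 1/16 < sq z}) (\<lambda>z. f z * (rho e z)\<^sup>2)"
  proof (rule continuous_on_cong[THEN iffD2])
    show "continuous_on ({z. sq z < e} \<union> {z. 1/16 < sq z}) (\<lambda>z. 0::real)" by simp
    show "\<And>z. z \<in> {z. sq z < e} \<union> {z. 1/16 < sq z} \<Longrightarrow> f z * (rho e z)\<^sup>2 = 0"
      using Gc_zero1[OF e0 e1] Gc_zero2[OF e0 e1] by (auto simp: rho_def)
  qed simp
  show ?thesis
    by (subst U, rule continuous_on_open_Un[OF _ _ c1 c2])
       (intro open_PP open_Un open_sq_less open_sq_greater)+
qed

end
end


lemma cont_line_x: "continuous_on UNIV (\<lambda>t. Complex t b)"
proof -
  have "continuous_on UNIV (\<lambda>t. complex_of_real t + \<i> * complex_of_real b)"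
    by (intro continuous_intros)
  moreover have "(\<lambda>t. complex_of_real t + \<i> * complex_of_real b) = (\<lambda>t. Complex t b)"
    by (auto simp: complex_eq_iff)
  ultimately show ?thesis by metis
qed

lemma cont_line_y: "continuous_on UNIV (\<lambda>t. Complex a t)"
proof -
  have "continuous_on UNIV (\<lambda>t. complex_of_real a + \<i> * complex_of_real t)"
    by (intro continuous_intros)
  moreover have "(\<lambda>t. complex_of_real a + \<i> * complex_of_real t) = (\<lambda>t. Complex a t)"
    by (auto simp: complex_eq_iff)
  ultimately show ?thesis by metis
qed

lemma Complex_PP: "0 < a\<^sup>2 + b\<^sup>2 \<Longrightarrow> a\<^sup>2 + b\<^sup>2 < 1/4 \<Longrightarrow> Complex a b \<in> PP"
proof -
  assume h: "0 < a\<^sup>2 + b\<^sup>2" "a\<^sup>2 + b\<^sup>2 < 1/4"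
  have "Complex a b \<noteq> 0" using h by (auto simp: complex_eq_iff)
  moreover have "(norm (Complex a b))\<^sup>2 < (1/2)\<^sup>2"
    using h by (simp only: sq_norm[symmetric] sq_Complex) (simp add: power2_eq_square)
  then have "norm (Complex a b) < 1/2" by (rule power2_less_imp_less) simp
  ultimately show ?thesis by simp
qed

context setting
begin

context fixes e :: real assumes e0: "0 < e" and e1: "2*e < 1/25"
begin

lemma rho_line_x: assumes "t\<^sup>2 + b\<^sup>2 \<notin> {e, 2*e, 1/25, 1/16}"
  shows "((\<lambda>t. rho e (Complex t b)) has_real_derivative Gd e (t\<^sup>2 + b\<^sup>2) * (2 * t)) (at t)"
  unfolding rho_def sq_Complex
  by (rule DERIV_chain2[of "Gc e" _ "\<lambda>t. t\<^sup>2 + b\<^sup>2" t, OF Gc_deriv[OF e0 e1 assms]])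
     (auto intro!: derivative_eq_intros)

lemma rho_line_y: assumes "a\<^sup>2 + t\<^sup>2 \<notin> {e, 2*e, 1/25, 1/16}"
  shows "((\<lambda>t. rho e (Complex a t)) has_real_derivative Gd e (a\<^sup>2 + t\<^sup>2) * (2 * t)) (at t)"
  unfolding rho_def sq_Complex
  by (rule DERIV_chain2[of "Gc e" _ "\<lambda>t. a\<^sup>2 + t\<^sup>2" t, OF Gc_deriv[OF e0 e1 assms]])
     (auto intro!: derivative_eq_intros)

lemma rho_zero: "sq z \<le> e \<or> 1/16 \<le> sq z \<Longrightarrow> rho e z = 0"
  using Gc_zero1[OF e0 e1] Gc_zero2[OF e0 e1] by (auto simp: rho_def)

lemma Phix_zero: "sq z \<le> e \<or> 1/16 \<le> sq z \<Longrightarrow> Phix e z = 0"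
  using rho_zero by (auto simp: Phix_def)

lemma Phiy_zero: "sq z \<le> e \<or> 1/16 \<le> sq z \<Longrightarrow> Phiy e z = 0"
  using rho_zero by (auto simp: Phiy_def)

lemma zero_deriv_open:
  fixes W :: "real \<Rightarrow> real"
  assumes "open T" "t \<in> T" "\<And>x. x \<in> T \<Longrightarrow> W x = 0"
  shows "(W has_real_derivative 0) (at t)"
  by (rule has_field_derivative_transform_within_open[of "\<lambda>_. 0" 0 t T])
     (use assms in auto)

lemma line_x: "((\<lambda>t. Phix e (Complex t b)) has_integral 0) UNIV"
proof (rule ftc_line[where S="{t. t\<^sup>2 + b\<^sup>2 \<in> {e, 2*e, 1/25, 1/16}}"
      and W="\<lambda>t. vx (Complex t b) * v (Complex t b) * (rho e (Complex t b))\<^sup>2"])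
  show "finite {t. t\<^sup>2 + b\<^sup>2 \<in> {e, 2*e, 1/25, 1/16}}" by (rule finite_sq_line) simp
  show "continuous_on {-1..1} (\<lambda>t. vx (Complex t b) * v (Complex t b) * (rho e (Complex t b))\<^sup>2)"
  proof -
    have cvv: "continuous_on PP (\<lambda>z. vx z * v z)" using cont_vx cont_v by (intro continuous_intros)
    have "continuous_on UNIV (\<lambda>t. vx (Complex t b) * v (Complex t b) * (rho e (Complex t b))\<^sup>2)"
      using continuous_on_compose2[OF cont_cut[OF e0 e1 cvv] cont_line_x[of b]] by simp
    then show ?thesis by (rule continuous_on_subset) simp
  qed
  have r1: "rho e (Complex 1 b) = 0" "rho e (Complex (-1) b) = 0"
    by (auto intro!: rho_zero simp: sq_Complex)
  show "vx (Complex (-1) b) * v (Complex (-1) b) * (rho e (Complex (-1) b))\<^sup>2 = 0"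
       "vx (Complex 1 b) * v (Complex 1 b) * (rho e (Complex 1 b))\<^sup>2 = 0" using r1 by simp_all
  show "Phix e (Complex t b) = 0" if "t \<notin> {-1<..<1}" for t
  proof -
    have "1 \<le> \<bar>t\<bar>" using that by auto
    then have "1 * 1 \<le> \<bar>t\<bar> * \<bar>t\<bar>" by (intro mult_mono) auto
    then have "1 \<le> t\<^sup>2" by (simp add: power2_eq_square)
    then show ?thesis by (intro Phix_zero) (auto intro: add_increasing2)
  qed
  fix t assume t: "t \<in> {-1<..<1} - {t. t\<^sup>2 + b\<^sup>2 \<in> {e, 2*e, 1/25, 1/16}}"
  then have nk: "t\<^sup>2 + b\<^sup>2 \<notin> {e, 2*e, 1/25, 1/16}" by simp
  consider "t\<^sup>2 + b\<^sup>2 < e" | "1/16 < t\<^sup>2 + b\<^sup>2" | "e < t\<^sup>2 + b\<^sup>2" "t\<^sup>2 + b\<^sup>2 < 1/16"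
    using nk by fastforce
  then show "((\<lambda>t. vx (Complex t b) * v (Complex t b) * (rho e (Complex t b))\<^sup>2)
      has_real_derivative Phix e (Complex t b)) (at t)"
  proof cases
    case 1
    have o: "open {t. t\<^sup>2 + b\<^sup>2 < e}" by (intro open_Collect_less continuous_intros)
    have "Phix e (Complex t b) = 0" using 1 by (intro Phix_zero) auto
    then show ?thesis
      using zero_deriv_open[OF o, of t "\<lambda>t. vx (Complex t b) * v (Complex t b) * (rho e (Complex t b))\<^sup>2"]
        1 rho_zero by auto
  next
    case 2
    have o: "open {t. 1/16 < t\<^sup>2 + b\<^sup>2}" by (intro open_Collect_less continuous_intros)
    have "Phix e (Complex t b) = 0" using 2 by (intro Phix_zero) auto
    then show ?thesis
      using zero_deriv_open[OF o, of t "\<lambda>t. vx (Complex t b) * v (Complex t b) * (rho e (Complex t b))\<^sup>2"]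
        2 rho_zero by auto
  next
    case 3
    have z: "Complex t b \<in> PP" using 3 e0 by (intro Complex_PP) auto
    from DERIV_mult[OF DERIV_mult[OF vx_line_x[OF z] v_line_x[OF z]] DERIV_power[OF rho_line_x[OF nk], of 2]]
    show ?thesis
      by (rule DERIV_cong) (simp add: Phix_def algebra_simps power2_eq_square)
  qed
qed

lemma line_y: "((\<lambda>t. Phiy e (Complex a t)) has_integral 0) UNIV"
proof (rule ftc_line[where S="{t. t\<^sup>2 + a\<^sup>2 \<in> {e, 2*e, 1/25, 1/16}}"
      and W="\<lambda>t. vy (Complex a t) * v (Complex a t) * (rho e (Complex a t))\<^sup>2"])
  show "finite {t. t\<^sup>2 + a\<^sup>2 \<in> {e, 2*e, 1/25, 1/16}}" by (rule finite_sq_line) simp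
  show "continuous_on {-1..1} (\<lambda>t. vy (Complex a t) * v (Complex a t) * (rho e (Complex a t))\<^sup>2)"
  proof -
    have cvv: "continuous_on PP (\<lambda>z. vy z * v z)" using cont_vy cont_v by (intro continuous_intros)
    have "continuous_on UNIV (\<lambda>t. vy (Complex a t) * v (Complex a t) * (rho e (Complex a t))\<^sup>2)"
      using continuous_on_compose2[OF cont_cut[OF e0 e1 cvv] cont_line_y[of a]] by simp
    then show ?thesis by (rule continuous_on_subset) simp
  qed
  have r1: "rho e (Complex a 1) = 0" "rho e (Complex a (-1)) = 0"
    by (auto intro!: rho_zero simp: sq_Complex)
  show "vy (Complex a (-1)) * v (Complex a (-1)) * (rho e (Complex a (-1)))\<^sup>2 = 0"
       "vy (Complex a 1) * v (Complex a 1) * (rho e (Complex a 1))\<^sup>2 = 0" using r1 by simp_all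
  show "Phiy e (Complex a t) = 0" if "t \<notin> {-1<..<1}" for t
  proof -
    have "1 \<le> \<bar>t\<bar>" using that by auto
    then have "1 * 1 \<le> \<bar>t\<bar> * \<bar>t\<bar>" by (intro mult_mono) auto
    then have "1 \<le> t\<^sup>2" by (simp add: power2_eq_square)
    then show ?thesis by (intro Phiy_zero) (auto intro: add_increasing)
  qed
  fix t assume t: "t \<in> {-1<..<1} - {t. t\<^sup>2 + a\<^sup>2 \<in> {e, 2*e, 1/25, 1/16}}"
  then have nk: "a\<^sup>2 + t\<^sup>2 \<notin> {e, 2*e, 1/25, 1/16}" by (simp add: add.commute)
  consider "a\<^sup>2 + t\<^sup>2 < e" | "1/16 < a\<^sup>2 + t\<^sup>2" | "e < a\<^sup>2 + t\<^sup>2" "a\<^sup>2 + t\<^sup>2 < 1/16"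
    using nk by fastforce
  then show "((\<lambda>t. vy (Complex a t) * v (Complex a t) * (rho e (Complex a t))\<^sup>2)
      has_real_derivative Phiy e (Complex a t)) (at t)"
  proof cases
    case 1
    have o: "open {t. a\<^sup>2 + t\<^sup>2 < e}" by (intro open_Collect_less continuous_intros)
    have "Phiy e (Complex a t) = 0" using 1 by (intro Phiy_zero) auto
    then show ?thesis
      using zero_deriv_open[OF o, of t "\<lambda>t. vy (Complex a t) * v (Complex a t) * (rho e (Complex a t))\<^sup>2"]
        1 rho_zero by auto
  next
    case 2
    have o: "open {t. 1/16 < a\<^sup>2 + t\<^sup>2}" by (intro open_Collect_less continuous_intros)
    have "Phiy e (Complex a t) = 0" using 2 by (intro Phiy_zero) auto
    then show ?thesis
      using zero_deriv_open[OF o, of t "\<lambda>t. vy (Complex a t) * v (Complex a t) * (rho e (Complex a t))\<^sup>2"]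
        2 rho_zero by auto
  next
    case 3
    have z: "Complex a t \<in> PP" using 3 e0 by (intro Complex_PP) auto
    from DERIV_mult[OF DERIV_mult[OF vy_line_y[OF z] v_line_y[OF z]] DERIV_power[OF rho_line_y[OF nk], of 2]]
    show ?thesis
      by (rule DERIV_cong) (simp add: Phiy_def algebra_simps power2_eq_square)
  qed
qed

end
end


lemma young: fixes w r a b p c :: real
  shows "-(2*w*r*(a*p + b*c)) \<le> (a\<^sup>2+b\<^sup>2)*r\<^sup>2/2 + 2*w\<^sup>2*(p\<^sup>2+c\<^sup>2)"
proof -
  have "0 \<le> (r*a + 2*w*p)\<^sup>2 + (r*b + 2*w*c)\<^sup>2" by simp
  moreover have "(a\<^sup>2+b\<^sup>2)*r\<^sup>2/2 + 2*w\<^sup>2*(p\<^sup>2+c\<^sup>2) - (-(2*w*r*(a*p + b*c)))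
     = ((r*a + 2*w*p)\<^sup>2 + (r*b + 2*w*c)\<^sup>2)/2"
    by (simp add: power2_eq_square field_simps)
  ultimately show ?thesis by argo
qed

lemma int_mult_bounded:
  fixes f g :: "'a \<Rightarrow> real"
  assumes f: "integrable M f" and g: "g \<in> borel_measurable M" and b: "\<And>x. \<bar>g x\<bar> \<le> C"
  shows "integrable M (\<lambda>x. f x * g x)"
proof (rule Bochner_Integration.integrable_bound[where f="\<lambda>x. C * f x"])
  show "integrable M (\<lambda>x. C * f x)" using f by simp
  show "(\<lambda>x. f x * g x) \<in> borel_measurable M" using f g by measurable
  show "AE x in M. norm (f x * g x) \<le> norm (C * f x)"
  proof (rule AE_I2)
    fix x
    have "\<bar>f x\<bar> * \<bar>g x\<bar> \<le> \<bar>f x\<bar> * C" using b[of x] by (intro mult_left_mono) auto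
    moreover have "0 \<le> C" using b[of x] by linarith
    ultimately show "norm (f x * g x) \<le> norm (C * f x)" by (simp add: abs_mult mult.commute)
  qed
qed

definition cbx :: "real \<Rightarrow> complex set" where "cbx r = cbox (Complex (-r) (-r)) (Complex r r)"

lemma measure_cbx: "0 \<le> r \<Longrightarrow> measure lborel (cbx r) = (2*r)\<^sup>2"
  by (simp add: cbx_def measure_lborel_cbox_eq Basis_complex_def power2_eq_square)

lemma abs_le_of_sq: "(x::real)\<^sup>2 \<le> r\<^sup>2 \<Longrightarrow> 0 \<le> r \<Longrightarrow> \<bar>x\<bar> \<le> r"
  by (metis abs_le_square_iff abs_of_nonneg)

lemma sq_cbx: "0 \<le> r \<Longrightarrow> sq z \<le> r\<^sup>2 \<Longrightarrow> z \<in> cbx r"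
proof -
  assume r: "0 \<le> r" "sq z \<le> r\<^sup>2"
  have "(Re z)\<^sup>2 \<le> r\<^sup>2" "(Im z)\<^sup>2 \<le> r\<^sup>2"
    using r(2) zero_le_power2[of "Im z"] zero_le_power2[of "Re z"] unfolding sq_def by linarith+
  then have "\<bar>Re z\<bar> \<le> r" "\<bar>Im z\<bar> \<le> r" using r abs_le_of_sq by auto
  then show ?thesis by (auto simp: cbx_def in_cbox_complex_iff)
qed

lemma sq_PP: "0 < sq z \<Longrightarrow> sq z < 1/4 \<Longrightarrow> z \<in> PP"
  using Complex_PP[of "Re z" "Im z"] by (simp add: sq_def)

definition Ann :: "real \<Rightarrow> complex set" where "Ann e = {z. e \<le> sq z \<and> sq z \<le> 1/16}"
definition gx :: "real \<Rightarrow> complex \<Rightarrow> real" where "gx e z = Gd e (sq z) * 2 * Re z"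
definition gy :: "real \<Rightarrow> complex \<Rightarrow> real" where "gy e z = Gd e (sq z) * 2 * Im z"

lemma Ann_compact: "compact (Ann e)"
unfolding compact_eq_bounded_closed proof (intro conjI)
  show "closed (Ann e)" unfolding Ann_def
    by (intro closed_Collect_conj closed_Collect_le continuous_intros) (auto simp: sq_def intro!: continuous_intros)
  have "Ann e \<subseteq> cbx (1/4)" by (auto simp: Ann_def intro!: sq_cbx simp: power2_eq_square)
  then show "bounded (Ann e)" unfolding cbx_def by (rule bounded_subset[OF bounded_cbox])
qed

lemma Ann_meas[measurable]: "Ann e \<in> sets lborel"
  using Ann_compact by (simp add: borel_compact)

lemma Ann_cball: "Ann e \<subseteq> cball 0 (1/4)"
proof
  fix z assume "z \<in> Ann e"
  then have h: "sq z \<le> 1/16" by (simp add: Ann_def)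
  have e16: "(1/4::real)\<^sup>2 = 1/16" by (simp add: power2_eq_square)
  have "(norm z)\<^sup>2 \<le> (1/4)\<^sup>2" using h by (simp only: e16 sq_norm[symmetric])
  from abs_le_of_sq[OF this] show "z \<in> cball 0 (1/4)" by simp
qed

lemma gx_meas: "(\<lambda>z. indicator (Ann e) z * gx e z) \<in> borel_measurable lborel"
  unfolding gx_def Gd_def sq_def Ann_def by measurable

lemma gy_meas: "(\<lambda>z. indicator (Ann e) z * gy e z) \<in> borel_measurable lborel"
  unfolding gy_def Gd_def sq_def Ann_def by measurable

context setting
begin

context fixes e :: real assumes e0: "0 < e" and e1: "2*e < 1/25"
begin

lemma Ann_PP: "Ann e \<subseteq> PP"
  using e0 by (auto simp: Ann_def intro!: sq_PP)

lemma rho_out: "z \<notin> Ann e \<Longrightarrow> rho e z = 0"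
  by (rule rho_zero[OF e0 e1]) (auto simp: Ann_def)

lemma gxy_out: "z \<notin> Ann e \<Longrightarrow> gx e z = 0 \<and> gy e z = 0"
  using Gd_zero[OF e0 e1, of "sq z"] by (auto simp: Ann_def gx_def gy_def)

lemma cont_rho: "continuous_on S (rho e)"
  unfolding rho_def[abs_def] by (rule continuous_on_compose2[OF Gc_cont[OF e0 e1] cont_sq]) auto

lemma intA: assumes f: "continuous_on PP f" shows "integrable lborel (\<lambda>z. f z * (rho e z)\<^sup>2)"
proof -
  have "continuous_on (Ann e) (\<lambda>z. f z * (rho e z)\<^sup>2)"
    using continuous_on_subset[OF f Ann_PP] cont_rho by (intro continuous_intros)
  from borel_integrable_compact[OF Ann_compact this]
  have i: "integrable lborel (\<lambda>z. indicator (Ann e) z *\<^sub>R (f z * (rho e z)\<^sup>2))" .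
  have "(\<lambda>z. indicator (Ann e) z *\<^sub>R (f z * (rho e z)\<^sup>2)) = (\<lambda>z. f z * (rho e z)\<^sup>2)"
    by (rule ext) (auto simp: indicator_def rho_out)
  then show ?thesis using i by simp
qed

lemma gx_bound: "\<bar>indicator (Ann e) z * gx e z\<bar> \<le> 2 * (1/e + 400/9)"
proof (cases "z \<in> Ann e")
  case True
  have "\<bar>Re z\<bar> \<le> 1" using Ann_cball True abs_Re_le_cmod[of z] by force
  moreover have "\<bar>Gd e (sq z)\<bar> \<le> 1/e + 400/9" using e0 by (auto simp: Gd_def)
  ultimately have "\<bar>Gd e (sq z)\<bar> * \<bar>Re z\<bar> \<le> (1/e + 400/9) * 1"
    by (intro mult_mono) auto
  then show ?thesis using True by (simp add: gx_def abs_mult)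
qed (use e0 in simp)

lemma gy_bound: "\<bar>indicator (Ann e) z * gy e z\<bar> \<le> 2 * (1/e + 400/9)"
proof (cases "z \<in> Ann e")
  case True
  have "\<bar>Im z\<bar> \<le> 1" using Ann_cball True abs_Im_le_cmod[of z] by force
  moreover have "\<bar>Gd e (sq z)\<bar> \<le> 1/e + 400/9" using e0 by (auto simp: Gd_def)
  ultimately have "\<bar>Gd e (sq z)\<bar> * \<bar>Im z\<bar> \<le> (1/e + 400/9) * 1"
    by (intro mult_mono) auto
  then show ?thesis using True by (simp add: gy_def abs_mult)
qed (use e0 in simp)

lemma intB: assumes f: "continuous_on PP f"
  shows "integrable lborel (\<lambda>z. f z * rho e z * gx e z)" "integrable lborel (\<lambda>z. f z * rho e z * gy e z)"
proof -
  have "continuous_on (Ann e) (\<lambda>z. f z * rho e z)"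
    using continuous_on_subset[OF f Ann_PP] cont_rho by (intro continuous_intros)
  from borel_integrable_compact[OF Ann_compact this]
  have i: "integrable lborel (\<lambda>z. indicator (Ann e) z * (f z * rho e z))" by simp
  have "integrable lborel (\<lambda>z. indicator (Ann e) z * (f z * rho e z) * (indicator (Ann e) z * gx e z))"
    by (rule int_mult_bounded[OF i gx_meas gx_bound])
  moreover have "(\<lambda>z. indicator (Ann e) z * (f z * rho e z) * (indicator (Ann e) z * gx e z)) = (\<lambda>z. f z * rho e z * gx e z)"
    by (rule ext) (auto simp: indicator_def rho_out)
  ultimately show "integrable lborel (\<lambda>z. f z * rho e z * gx e z)" by simp
  have "integrable lborel (\<lambda>z. indicator (Ann e) z * (f z * rho e z) * (indicator (Ann e) z * gy e z))"
    by (rule int_mult_bounded[OF i gy_meas gy_bound])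
  moreover have "(\<lambda>z. indicator (Ann e) z * (f z * rho e z) * (indicator (Ann e) z * gy e z)) = (\<lambda>z. f z * rho e z * gy e z)"
    by (rule ext) (auto simp: indicator_def rho_out)
  ultimately show "integrable lborel (\<lambda>z. f z * rho e z * gy e z)" by simp
qed

lemma int_Grad: "integrable lborel (\<lambda>z. (gx e z)\<^sup>2 + (gy e z)\<^sup>2)"
proof -
  have i: "integrable lborel (indicator (Ann e) :: complex \<Rightarrow> real)"
    using emeasure_bounded_finite[OF compact_imp_bounded[OF Ann_compact]]
    by (intro integrable_real_indicator) (auto simp: Ann_compact borel_compact)
  have ix: "integrable lborel (\<lambda>z. indicator (Ann e) z * (indicator (Ann e) z * gx e z))"
    by (rule int_mult_bounded[OF i gx_meas gx_bound])
  have ixx: "integrable lborel (\<lambda>z. indicator (Ann e) z * (indicator (Ann e) z * gx e z) * (indicator (Ann e) z * gx e z))"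
    by (rule int_mult_bounded[OF ix gx_meas gx_bound])
  have iy: "integrable lborel (\<lambda>z. indicator (Ann e) z * (indicator (Ann e) z * gy e z))"
    by (rule int_mult_bounded[OF i gy_meas gy_bound])
  have iyy: "integrable lborel (\<lambda>z. indicator (Ann e) z * (indicator (Ann e) z * gy e z) * (indicator (Ann e) z * gy e z))"
    by (rule int_mult_bounded[OF iy gy_meas gy_bound])
  have "integrable lborel (\<lambda>z. indicator (Ann e) z * (indicator (Ann e) z * gx e z) * (indicator (Ann e) z * gx e z)
     + indicator (Ann e) z * (indicator (Ann e) z * gy e z) * (indicator (Ann e) z * gy e z))"
    using ixx iyy by simp
  moreover have "(\<lambda>z. indicator (Ann e) z * (indicator (Ann e) z * gx e z) * (indicator (Ann e) z * gx e z)
     + indicator (Ann e) z * (indicator (Ann e) z * gy e z) * (indicator (Ann e) z * gy e z)) = (\<lambda>z. (gx e z)\<^sup>2 + (gy e z)\<^sup>2)"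
    by (rule ext) (auto simp: indicator_def gxy_out power2_eq_square)
  ultimately show ?thesis by simp
qed

end
end


lemma int_cbx: "integrable lborel (indicator (cbx r) :: complex \<Rightarrow> real)"
  using emeasure_bounded_finite[OF bounded_cbox] by (intro integrable_real_indicator) (auto simp: cbx_def)

lemma integral_cbx: "0 \<le> r \<Longrightarrow> integral\<^sup>L lborel (indicator (cbx r) :: complex \<Rightarrow> real) = (2*r)\<^sup>2"
  by (simp add: measure_cbx)

context setting
begin

context fixes e :: real assumes e0: "0 < e" and e1: "2*e < 1/25"
begin

lemma Phix_split: "Phix e = (\<lambda>z. (vxx z * v z + vx z * vx z) * (rho e z)\<^sup>2 + (2 * vx z * v z) * rho e z * gx e z)"
  by (rule ext) (simp add: Phix_def gx_def algebra_simps)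

lemma Phiy_split: "Phiy e = (\<lambda>z. (vyy z * v z + vy z * vy z) * (rho e z)\<^sup>2 + (2 * vy z * v z) * rho e z * gy e z)"
  by (rule ext) (simp add: Phiy_def gy_def algebra_simps)

lemma int_Phix: "integrable lborel (Phix e)"
proof -
  have c1: "continuous_on PP (\<lambda>z. vxx z * v z + vx z * vx z)"
    using cont_vxx cont_v cont_vx by (intro continuous_intros)
  have c2: "continuous_on PP (\<lambda>z. 2 * vx z * v z)"
    using cont_v cont_vx by (intro continuous_intros)
  show ?thesis unfolding Phix_split
    using intA[OF e0 e1 c1] intB(1)[OF e0 e1 c2] by simp
qed

lemma int_Phiy: "integrable lborel (Phiy e)"
proof -
  have c1: "continuous_on PP (\<lambda>z. vyy z * v z + vy z * vy z)"
    using cont_vyy cont_v cont_vy by (intro continuous_intros)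
  have c2: "continuous_on PP (\<lambda>z. 2 * vy z * v z)"
    using cont_v cont_vy by (intro continuous_intros)
  show ?thesis unfolding Phiy_split
    using intA[OF e0 e1 c1] intB(2)[OF e0 e1 c2] by simp
qed

lemma Phix_0: "integral\<^sup>L lborel (Phix e) = 0"
  by (rule complex_fubini_zero_x[OF int_Phix line_x[OF e0 e1]])

lemma Phiy_0: "integral\<^sup>L lborel (Phiy e) = 0"
  by (rule complex_fubini_zero_y[OF int_Phiy line_y[OF e0 e1]])

lemma energy_bound:
  assumes M: "\<And>z. z \<in> cball 0 (1/4) \<Longrightarrow> \<bar>v z\<bar> \<le> M"
  shows "integrable lborel (\<lambda>z. ((vx z)\<^sup>2 + (vy z)\<^sup>2) * (rho e z)\<^sup>2)
    \<and> integral\<^sup>L lborel (\<lambda>z. ((vx z)\<^sup>2 + (vy z)\<^sup>2) * (rho e z)\<^sup>2) \<le> 4 * M\<^sup>2 * (64 + 10000/81)"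
proof -
  define Q where "Q = (\<lambda>z. ((vx z)\<^sup>2 + (vy z)\<^sup>2) * (rho e z)\<^sup>2)"
  define Lp where "Lp = (\<lambda>z. ((vxx z + vyy z) * v z) * (rho e z)\<^sup>2)"
  define R where "R = (\<lambda>z. 2 * v z * rho e z * (vx z * gx e z + vy z * gy e z))"
  define G where "G = (\<lambda>z. (gx e z)\<^sup>2 + (gy e z)\<^sup>2)"
  have iQ: "integrable lborel Q" unfolding Q_def
    using cont_vx cont_vy by (intro intA[OF e0 e1] continuous_intros)
  have iL: "integrable lborel Lp" unfolding Lp_def
    using cont_vxx cont_vyy cont_v by (intro intA[OF e0 e1] continuous_intros)
  have iR: "integrable lborel R"
  proof -
    have c: "continuous_on PP (\<lambda>z. 2 * v z * vx z)" "continuous_on PP (\<lambda>z. 2 * v z * vy z)"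
      using cont_v cont_vx cont_vy by (auto intro!: continuous_intros)
    have "R = (\<lambda>z. 2 * v z * vx z * rho e z * gx e z + 2 * v z * vy z * rho e z * gy e z)"
      by (rule ext) (simp add: R_def algebra_simps)
    then show ?thesis using intB(1)[OF e0 e1 c(1)] intB(2)[OF e0 e1 c(2)] by simp
  qed
  have iG: "integrable lborel G" unfolding G_def by (rule int_Grad[OF e0 e1])
  have sum: "Phix e z + Phiy e z = Lp z + Q z + R z" for z
    by (simp add: Phix_def Phiy_def Lp_def Q_def R_def gx_def gy_def algebra_simps power2_eq_square)
  have "integral\<^sup>L lborel (\<lambda>z. Lp z + Q z + R z) = integral\<^sup>L lborel (\<lambda>z. Phix e z + Phiy e z)"
    using sum by simp
  also have "\<dots> = 0" using int_Phix int_Phiy Phix_0 Phiy_0 by simp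
  finally have eq0: "integral\<^sup>L lborel Lp + integral\<^sup>L lborel Q + integral\<^sup>L lborel R = 0"
    using iL iQ iR by simp
  have Lnn: "0 \<le> integral\<^sup>L lborel Lp"
  proof (rule integral_nonneg_AE, rule AE_I2)
    fix z
    show "0 \<le> Lp z"
    proof (cases "z \<in> PP")
      case True
      then show ?thesis using lap_v_sign[OF True] by (simp add: Lp_def mult.commute)
    next
      case False
      then have "z \<notin> Ann e" using Ann_PP[OF e0 e1] by auto
      then show ?thesis by (simp add: Lp_def rho_out[OF e0 e1])
    qed
  qed
  have pw: "- R z \<le> Q z / 2 + 2 * M\<^sup>2 * G z" for z
  proof (cases "z \<in> Ann e")
    case True
    then have "\<bar>v z\<bar> \<le> M" by (meson M Ann_cball subsetD)
    then have vM: "(v z)\<^sup>2 \<le> M\<^sup>2" by (metis abs_ge_zero abs_le_square_iff abs_of_nonneg order_trans)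
    have "- R z \<le> ((vx z)\<^sup>2 + (vy z)\<^sup>2) * (rho e z)\<^sup>2 / 2 + 2 * (v z)\<^sup>2 * ((gx e z)\<^sup>2 + (gy e z)\<^sup>2)"
      unfolding R_def by (rule young)
    also have "\<dots> \<le> Q z / 2 + 2 * M\<^sup>2 * G z"
      using vM unfolding Q_def G_def by (intro add_mono mult_right_mono mult_left_mono) auto
    finally show ?thesis .
  next
    case False
    then show ?thesis
      using rho_out[OF e0 e1 False] gxy_out[OF e0 e1 False] by (simp add: R_def Q_def G_def)
  qed
  have "integral\<^sup>L lborel (\<lambda>z. - R z) \<le> integral\<^sup>L lborel (\<lambda>z. Q z / 2 + 2 * M\<^sup>2 * G z)"
    using iR iQ iG pw by (intro integral_mono) auto
  then have step: "- integral\<^sup>L lborel R \<le> integral\<^sup>L lborel Q / 2 + 2 * M\<^sup>2 * integral\<^sup>L lborel G"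
    using iQ iG by simp
  have Gb: "integral\<^sup>L lborel G \<le> 64 + 10000/81"
  proof -
    have pwG: "G z \<le> 8/e * indicator (cbx (sqrt (2*e))) z + 40000/81 * indicator (cbx (1/4)) z" for z
    proof -
      have "G z = 4 * sq z * (Gd e (sq z))\<^sup>2"
        by (simp add: G_def gx_def gy_def sq_def algebra_simps power2_eq_square)
      also have "\<dots> \<le> (if sq z \<le> 2*e then 8/e else 0) + (if sq z \<le> 1/16 then 40000/81 else 0)"
        by (rule Gd_bound[OF e0 e1])
      also have "\<dots> \<le> 8/e * indicator (cbx (sqrt (2*e))) z + 40000/81 * indicator (cbx (1/4)) z"
      proof -
        have "sq z \<le> 2*e \<Longrightarrow> z \<in> cbx (sqrt (2*e))" using e0 by (intro sq_cbx) auto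
        moreover have "sq z \<le> 1/16 \<Longrightarrow> z \<in> cbx (1/4)" by (intro sq_cbx) (auto simp: power2_eq_square)
        ultimately show ?thesis using e0 by (auto simp: indicator_def)
      qed
      finally show ?thesis .
    qed
    have "integral\<^sup>L lborel G \<le> integral\<^sup>L lborel (\<lambda>z. 8/e * indicator (cbx (sqrt (2*e))) z + 40000/81 * indicator (cbx (1/4)) z)"
      using iG int_cbx pwG by (intro integral_mono) auto
    also have "\<dots> = 8/e * integral\<^sup>L lborel (indicator (cbx (sqrt (2*e))) :: complex \<Rightarrow> real)
        + 40000/81 * integral\<^sup>L lborel (indicator (cbx (1/4)) :: complex \<Rightarrow> real)"
      using int_cbx by (simp del: integral_indicator)
    also have "\<dots> = 8/e * (2 * sqrt (2*e))\<^sup>2 + 40000/81 * (2 * (1/4))\<^sup>2"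
    proof -
      have m1: "integral\<^sup>L lborel (indicator (cbx (sqrt (2*e))) :: complex \<Rightarrow> real) = (2 * sqrt (2*e))\<^sup>2"
        by (rule integral_cbx) (use e0 in simp)
      have m2: "integral\<^sup>L lborel (indicator (cbx (1/4)) :: complex \<Rightarrow> real) = (2 * (1/4))\<^sup>2"
        by (rule integral_cbx) simp
      show ?thesis by (simp only: m1 m2)
    qed
    also have "\<dots> = 64 + 10000/81" using e0 by (simp add: power_mult_distrib power2_eq_square)
    finally show ?thesis .
  qed
  have "integral\<^sup>L lborel Q \<le> integral\<^sup>L lborel Q / 2 + 2 * M\<^sup>2 * integral\<^sup>L lborel G"
    using eq0 Lnn step by linarith
  then have "integral\<^sup>L lborel Q \<le> 4 * M\<^sup>2 * integral\<^sup>L lborel G" by linarith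
  also have "\<dots> \<le> 4 * M\<^sup>2 * (64 + 10000/81)" using Gb by (intro mult_left_mono) auto
  finally show ?thesis using iQ unfolding Q_def by simp
qed

end
end


abbreviation Dst :: "complex set" where "Dst \<equiv> ball 0 (1/5) - {0}"

definition ee :: "nat \<Rightarrow> real" where "ee n = 1 / (100 * real (Suc n))"

lemma ee2: "2 * ee n = 1 / (50 * real (Suc n))" by (simp add: ee_def field_simps)

lemma ee_pos: "0 < ee n" and ee_small: "2 * ee n < 1/25"
proof -
  show "0 < ee n" by (simp add: ee_def)
  have "2 * ee n = 1 / (50 * real (Suc n))" by (rule ee2)
  also have "\<dots> \<le> 1 / 50" by (simp add: field_simps)
  finally show "2 * ee n < 1/25" by simp
qed

lemma ee_event: assumes "0 < s" shows "eventually (\<lambda>n. 2 * ee n \<le> s) sequentially"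
proof -
  obtain N :: nat where N: "1 / (50 * s) < real N" using reals_Archimedean2 by blast
  show ?thesis unfolding eventually_sequentially
  proof (intro exI allI impI)
    fix n assume "N \<le> n"
    then have "1 / (50 * s) < real (Suc n)" using N by linarith
    then have "1 < real (Suc n) * (50 * s)" using assms by (simp add: field_simps)
    then have "1 / (50 * real (Suc n)) < s" using assms by (simp add: field_simps)
    then show "2 * ee n \<le> s" by (simp only: ee2)
  qed
qed

lemma Dst_PP: "Dst \<subseteq> PP" by auto

lemma Dst_sq: "z \<in> Dst \<Longrightarrow> 0 < sq z \<and> sq z \<le> 1/25"
proof -
  assume z: "z \<in> Dst"
  then have "0 < norm z" "norm z < 1/5" by auto
  then have "0 < (norm z)\<^sup>2" "(norm z)\<^sup>2 \<le> (1/5)\<^sup>2" by (auto intro!: power_mono)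
  then show ?thesis by (simp add: sq_norm power2_eq_square)
qed

context setting
begin

lemma v_bounded: "\<exists>M. \<forall>z\<in>cball 0 (1/4). \<bar>v z\<bar> \<le> M"
proof -
  have "continuous_on (cball 0 (1/4)) v" using v_cont by (rule continuous_on_subset) auto
  then have "compact (v ` cball 0 (1/4))" by (intro compact_continuous_image) auto
  then obtain B where "\<forall>x\<in>v ` cball 0 (1/4). norm x \<le> B"
    using compact_imp_bounded bounded_iff by metis
  then show ?thesis by auto
qed

lemma part1: "set_integrable lborel Dst (\<lambda>z. (px v z)\<^sup>2 + (py v z)\<^sup>2)"
proof -
  obtain M where M: "\<And>z. z \<in> cball 0 (1/4) \<Longrightarrow> \<bar>v z\<bar> \<le> M" using v_bounded by blast
  define K where "K = 4 * M\<^sup>2 * (64 + 10000/81)"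
  define h where "h = (\<lambda>z. (vx z)\<^sup>2 + (vy z)\<^sup>2)"
  define g where "g = (\<lambda>z. indicator Dst z * h z)"
  define f where "f = (\<lambda>n z. ennreal (indicator Dst z * h z * (rho (ee n) z)\<^sup>2))"
  have EB: "integrable lborel (\<lambda>z. h z * (rho (ee n) z)\<^sup>2) \<and> integral\<^sup>L lborel (\<lambda>z. h z * (rho (ee n) z)\<^sup>2) \<le> K" for n
    unfolding h_def K_def by (rule energy_bound[OF ee_pos ee_small M])
  have hcont: "continuous_on Dst h" unfolding h_def
    using continuous_on_subset[OF cont_vx Dst_PP] continuous_on_subset[OF cont_vy Dst_PP]
    by (intro continuous_intros)
  have gm: "g \<in> borel_measurable lborel"
    using borel_measurable_continuous_on_indicator[OF _ hcont] by (simp add: g_def)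
  have fm: "f n \<in> borel_measurable lborel" for n
  proof -
    have m: "(\<lambda>z. h z * (rho (ee n) z)\<^sup>2) \<in> borel_measurable lborel" using EB[of n] by auto
    have Dm: "Dst \<in> sets lborel" by auto
    have m2[measurable]: "(\<lambda>z. indicator Dst z * (h z * (rho (ee n) z)\<^sup>2)) \<in> borel_measurable lborel"
      using borel_measurable_indicator[OF Dm] m by (rule borel_measurable_times)
    show ?thesis unfolding f_def by (simp add: mult.assoc)
  qed
  have lim: "liminf (\<lambda>n. f n z) = ennreal (g z)" for z
  proof (rule lim_imp_Liminf)
    show "((\<lambda>n. f n z) \<longlongrightarrow> ennreal (g z)) sequentially"
    proof (cases "z \<in> Dst")
      case True
      have s: "0 < sq z" "sq z \<le> 1/25" using Dst_sq[OF True] by auto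
      have "eventually (\<lambda>n. f n z = ennreal (g z)) sequentially"
        using ee_event[OF s(1)]
      proof eventually_elim
        case (elim n)
        then have "rho (ee n) z = 1" unfolding rho_def using s by (intro Gc_one[OF ee_pos ee_small])
        then show ?case by (simp add: f_def g_def)
      qed
      then show ?thesis by (rule tendsto_eventually)
    next
      case False
      then show ?thesis by (simp add: f_def g_def)
    qed
  qed simp
  have "(\<integral>\<^sup>+z. ennreal (g z) \<partial>lborel) = (\<integral>\<^sup>+z. liminf (\<lambda>n. f n z) \<partial>lborel)"
    by (simp add: lim)
  also have "\<dots> \<le> liminf (\<lambda>n. integral\<^sup>N lborel (f n))"
    by (rule nn_integral_liminf[OF fm])
  also have "\<dots> \<le> ennreal K"
  proof -
    have "integral\<^sup>N lborel (f n) \<le> ennreal K" for n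
    proof -
      have hnn: "0 \<le> h z" for z by (simp add: h_def)
      have "integral\<^sup>N lborel (f n) \<le> (\<integral>\<^sup>+z. ennreal (h z * (rho (ee n) z)\<^sup>2) \<partial>lborel)"
        unfolding f_def
        by (intro nn_integral_mono ennreal_leI) (auto simp: indicator_def hnn)
      also have "\<dots> = ennreal (integral\<^sup>L lborel (\<lambda>z. h z * (rho (ee n) z)\<^sup>2))"
        using EB[of n] hnn by (intro nn_integral_eq_integral) auto
      also have "\<dots> \<le> ennreal K" using EB[of n] by (intro ennreal_leI) auto
      finally show ?thesis .
    qed
    then have "limsup (\<lambda>n. integral\<^sup>N lborel (f n)) \<le> ennreal K"
      by (intro Limsup_bounded) auto
    moreover have "liminf (\<lambda>n. integral\<^sup>N lborel (f n)) \<le> limsup (\<lambda>n. integral\<^sup>N lborel (f n))"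
      by (rule Liminf_le_Limsup) simp
    ultimately show ?thesis by (rule order_trans[rotated])
  qed
  finally have fin0: "(\<integral>\<^sup>+z. ennreal (g z) \<partial>lborel) \<le> ennreal K" .
  have fin: "(\<integral>\<^sup>+z. ennreal (g z) \<partial>lborel) < \<infinity>"
    using le_less_trans[OF fin0 ennreal_less_top] by simp
  have ig: "integrable lborel g"
    by (rule integrableI_nonneg[OF gm _ fin]) (auto simp: g_def h_def)
  have "(\<lambda>z. indicator Dst z *\<^sub>R ((px v z)\<^sup>2 + (py v z)\<^sup>2)) = g"
  proof (rule ext)
    fix z show "indicator Dst z *\<^sub>R ((px v z)\<^sup>2 + (py v z)\<^sup>2) = g z"
    proof (cases "z \<in> Dst")
      case True
      then have "z \<in> PP" by auto
      then show ?thesis using True by (simp add: g_def h_def px_v py_v)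
    next
      case False
      then show ?thesis by (simp add: g_def)
    qed
  qed
  then show ?thesis unfolding set_integrable_def using ig by simp
qed

end


abbreviation B5 :: "complex set" where "B5 \<equiv> ball 0 (1/5)"

lemma test_fun_props:
  assumes "test_fun B5 \<phi>"
  shows "\<And>z. \<phi> differentiable (at z)" "\<And>z. px \<phi> differentiable (at z)" "\<And>z. py \<phi> differentiable (at z)"
    "compact (closure {z. \<phi> z \<noteq> 0})" "closure {z. \<phi> z \<noteq> 0} \<subseteq> B5"
proof -
  have s: "\<And>ds. pd_iter ds \<phi> differentiable_on UNIV" using assms by (auto simp: test_fun_def smooth_on_def)
  show "\<And>z. \<phi> differentiable (at z)" using s[of "[]"] by (simp add: differentiable_on_eq_differentiable_at)
  show "\<And>z. px \<phi> differentiable (at z)" using s[of "[True]"] by (simp add: differentiable_on_eq_differentiable_at)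
  show "\<And>z. py \<phi> differentiable (at z)" using s[of "[False]"] by (simp add: differentiable_on_eq_differentiable_at)
  show "compact (closure {z. \<phi> z \<noteq> 0})" "closure {z. \<phi> z \<noteq> 0} \<subseteq> B5"
    using assms by (auto simp: test_fun_def)
qed

lemma diff_cont: "(\<And>z. f differentiable (at z)) \<Longrightarrow> continuous_on S f"
  by (meson continuous_at_imp_continuous_on differentiable_imp_continuous_within)

lemma outside_zero:
  fixes \<phi> :: "complex \<Rightarrow> real"
  assumes "z \<notin> closure {z. \<phi> z \<noteq> 0}"
  shows "\<phi> z = 0" "px \<phi> z = 0" "py \<phi> z = 0"
proof -
  define K where "K = closure {z. \<phi> z \<noteq> 0}"
  have o: "open (- K)" unfolding K_def by auto
  have zero: "\<phi> w = 0" if "w \<notin> K" for w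
  proof (rule ccontr)
    assume "\<phi> w \<noteq> 0"
    then have "w \<in> {z. \<phi> z \<noteq> 0}" by simp
    then have "w \<in> K" unfolding K_def using closure_subset by (rule subsetD[rotated])
    then show False using that by simp
  qed
  have zK: "z \<notin> K" using assms by (simp add: K_def)
  show "\<phi> z = 0" using zero zK by simp
  have o1: "open {t. Complex t (Im z) \<in> - K}" by (rule open_line_x[OF o])
  have "((\<lambda>t. \<phi> (Complex t (Im z))) has_real_derivative 0) (at (Re z))"
  proof (rule has_field_derivative_transform_within_open[OF _ o1])
    show "((\<lambda>_. 0) has_real_derivative 0) (at (Re z))" by simp
    show "Re z \<in> {t. Complex t (Im z) \<in> - K}" using zK by simp
    show "\<And>x. x \<in> {t. Complex t (Im z) \<in> - K} \<Longrightarrow> 0 = \<phi> (Complex x (Im z))"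
      using zero by simp
  qed
  from px_eq[OF this] show "px \<phi> z = 0" by simp
  have o2: "open {t. Complex (Re z) t \<in> - K}" by (rule open_line_y[OF o])
  have "((\<lambda>t. \<phi> (Complex (Re z) t)) has_real_derivative 0) (at (Im z))"
  proof (rule has_field_derivative_transform_within_open[OF _ o2])
    show "((\<lambda>_. 0) has_real_derivative 0) (at (Im z))" by simp
    show "Im z \<in> {t. Complex (Re z) t \<in> - K}" using zK by simp
    show "\<And>x. x \<in> {t. Complex (Re z) t \<in> - K} \<Longrightarrow> 0 = \<phi> (Complex (Re z) x)"
      using zero by simp
  qed
  from py_eq[OF this] show "py \<phi> z = 0" by simp
qed


lemma abs_mult_le_sq: "\<bar>(a::real) * b\<bar> \<le> a\<^sup>2 + b\<^sup>2"
proof -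
  have "0 \<le> (\<bar>a\<bar> - \<bar>b\<bar>)\<^sup>2" by simp
  then have "2 * (\<bar>a\<bar> * \<bar>b\<bar>) \<le> a\<^sup>2 + b\<^sup>2" by (simp add: power2_eq_square algebra_simps)
  moreover have "0 \<le> \<bar>a\<bar> * \<bar>b\<bar>" by simp
  ultimately have "\<bar>a\<bar> * \<bar>b\<bar> \<le> a\<^sup>2 + b\<^sup>2" by linarith
  then show ?thesis by (simp add: abs_mult)
qed

lemma norm_ge_Re: "1 \<le> \<bar>Re z\<bar> \<Longrightarrow> z \<notin> B5"
  using abs_Re_le_cmod[of z] by auto

lemma norm_ge_Im: "1 \<le> \<bar>Im z\<bar> \<Longrightarrow> z \<notin> B5"
  using abs_Im_le_cmod[of z] by auto

context setting
begin

lemma I1_int: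
  assumes tf: "test_fun B5 \<phi>" and pw: "pw = px v \<or> pw = py v"
  shows "integrable lborel (\<lambda>z. indicator Dst z * (pw z * \<phi> z))"
proof (rule Bochner_Integration.integrable_bound)
  note P = test_fun_props[OF tf]
  have cphi: "continuous_on UNIV \<phi>" by (rule diff_cont[OF P(1)])
  have cpw: "continuous_on Dst pw"
  proof -
    have "continuous_on Dst vx" "continuous_on Dst vy"
      using continuous_on_subset[OF cont_vx Dst_PP] continuous_on_subset[OF cont_vy Dst_PP] by auto
    moreover have "continuous_on Dst (px v) = continuous_on Dst vx"
      by (rule continuous_on_cong) (auto simp: px_v)
    moreover have "continuous_on Dst (py v) = continuous_on Dst vy"
      by (rule continuous_on_cong) (auto simp: py_v)
    ultimately show ?thesis using pw by auto
  qed
  have i1: "integrable lborel (\<lambda>z. indicator Dst z *\<^sub>R ((px v z)\<^sup>2 + (py v z)\<^sup>2))"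
    using part1 by (simp add: set_integrable_def)
  have i2: "integrable lborel (\<lambda>z. indicator (cball 0 (1/5)) z *\<^sub>R (\<phi> z)\<^sup>2)"
    by (rule borel_integrable_compact) (auto intro!: continuous_intros continuous_on_subset[OF cphi])
  show "integrable lborel (\<lambda>z. indicator Dst z *\<^sub>R ((px v z)\<^sup>2 + (py v z)\<^sup>2) + indicator (cball 0 (1/5)) z *\<^sub>R (\<phi> z)\<^sup>2)"
    using i1 i2 by simp
  have "(\<lambda>z. indicator Dst z *\<^sub>R (pw z * \<phi> z)) \<in> borel_measurable borel"
    by (rule borel_measurable_continuous_on_indicator) (auto intro!: continuous_intros cpw continuous_on_subset[OF cphi])
  then show "(\<lambda>z. indicator Dst z * (pw z * \<phi> z)) \<in> borel_measurable lborel" by simp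
  show "AE z in lborel. norm (indicator Dst z * (pw z * \<phi> z))
     \<le> norm (indicator Dst z *\<^sub>R ((px v z)\<^sup>2 + (py v z)\<^sup>2) + indicator (cball 0 (1/5)) z *\<^sub>R (\<phi> z)\<^sup>2)"
  proof (rule AE_I2)
    fix z
    show "norm (indicator Dst z * (pw z * \<phi> z))
     \<le> norm (indicator Dst z *\<^sub>R ((px v z)\<^sup>2 + (py v z)\<^sup>2) + indicator (cball 0 (1/5)) z *\<^sub>R (\<phi> z)\<^sup>2)"
    proof (cases "z \<in> Dst")
      case True
      then have c: "z \<in> cball 0 (1/5)" by auto
      have "\<bar>pw z * \<phi> z\<bar> \<le> (pw z)\<^sup>2 + (\<phi> z)\<^sup>2" by (rule abs_mult_le_sq)
      also have "\<dots> \<le> (px v z)\<^sup>2 + (py v z)\<^sup>2 + (\<phi> z)\<^sup>2" using pw by auto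
      finally show ?thesis using True c by simp
    next
      case False
      then show ?thesis by simp
    qed
  qed
qed

lemma I2_int:
  assumes tf: "test_fun B5 \<phi>" and pf: "pf = px \<phi> \<or> pf = py \<phi>"
  shows "integrable lborel (\<lambda>z. indicator B5 z * (v z * pf z))"
proof -
  note P = test_fun_props[OF tf]
  have cpf: "continuous_on UNIV pf" using pf diff_cont[OF P(2)] diff_cont[OF P(3)] by auto
  have cv: "continuous_on (cball 0 (1/5)) v" using v_cont by (rule continuous_on_subset) auto
  have "integrable lborel (\<lambda>z. indicator (cball 0 (1/5)) z *\<^sub>R (v z * pf z))"
    by (rule borel_integrable_compact) (auto intro!: continuous_intros cv continuous_on_subset[OF cpf])
  moreover have "(\<lambda>z. indicator (cball 0 (1/5)) z *\<^sub>R (v z * pf z)) = (\<lambda>z. indicator B5 z * (v z * pf z))"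
  proof (rule ext)
    fix z
    show "indicator (cball 0 (1/5)) z *\<^sub>R (v z * pf z) = indicator B5 z * (v z * pf z)"
    proof (cases "z \<in> cball 0 (1/5) - B5")
      case True
      then have "z \<notin> closure {z. \<phi> z \<noteq> 0}" using P(5) by auto
      then have "pf z = 0" using outside_zero[of z \<phi>] pf by auto
      then show ?thesis by simp
    next
      case False
      then show ?thesis by (auto simp: indicator_def)
    qed
  qed
  ultimately show ?thesis by simp
qed

lemma dist_x:
  assumes tf: "test_fun B5 \<phi>"
  shows "(LINT z:B5|lborel. v z * px \<phi> z) = - (LINT z:Dst|lborel. px v z * \<phi> z)"
proof -
  note P = test_fun_props[OF tf]
  define K where "K = closure {z. \<phi> z \<noteq> 0}"
  have KB: "K \<subseteq> B5" using P(5) by (simp add: K_def)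
  define H where "H = (\<lambda>z. indicator Dst z * (px v z * \<phi> z) + indicator B5 z * (v z * px \<phi> z))"
  have i1: "integrable lborel (\<lambda>z. indicator Dst z * (px v z * \<phi> z))" by (rule I1_int[OF tf]) simp
  have i2: "integrable lborel (\<lambda>z. indicator B5 z * (v z * px \<phi> z))" by (rule I2_int[OF tf]) simp
  have iH: "integrable lborel H" unfolding H_def using i1 i2 by simp
  have "integral\<^sup>L lborel H = 0"
  proof (rule complex_fubini_zero_x[OF iH])
    fix y :: real assume y: "y \<noteq> 0"
    define W where "W = (\<lambda>t. v (Complex t y) * \<phi> (Complex t y))"
    have D: "(W has_real_derivative H (Complex t y)) (at t)" for t
    proof (cases "Complex t y \<in> B5")
      case True
      then have z: "Complex t y \<in> PP" "Complex t y \<in> Dst" using y by (auto simp: complex_eq_iff)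
      from DERIV_mult[OF v_line_x[OF z(1)] px_line[OF P(1)]]
      show ?thesis unfolding W_def
        by (rule DERIV_cong) (use z True in \<open>simp add: H_def px_v algebra_simps\<close>)
    next
      case False
      then have nK: "Complex t y \<notin> K" using KB by auto
      have o: "open {t. Complex t y \<in> - K}" unfolding K_def by (rule open_line_x, rule open_Compl, rule closed_closure)
      have "(W has_real_derivative 0) (at t)"
      proof (rule has_field_derivative_transform_within_open[OF _ o])
        show "((\<lambda>_. 0) has_real_derivative 0) (at t)" by simp
        show "t \<in> {t. Complex t y \<in> - K}" using nK by simp
        fix x assume "x \<in> {t. Complex t y \<in> - K}"
        then have "Complex x y \<notin> closure {z. \<phi> z \<noteq> 0}" by (simp add: K_def)
        then have "\<phi> (Complex x y) = 0" by (rule outside_zero(1))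
        then show "0 = W x" by (simp add: W_def)
      qed
      moreover have "H (Complex t y) = 0" using False by (simp add: H_def)
      ultimately show ?thesis by simp
    qed
    show "((\<lambda>t. H (Complex t y)) has_integral 0) UNIV"
    proof (rule ftc_line[where S="{}" and W=W])
      show "continuous_on {-1..1} W"
        by (intro continuous_at_imp_continuous_on ballI DERIV_isCont[OF D])
      have "Complex (-1) y \<notin> B5" "Complex 1 y \<notin> B5" by (intro norm_ge_Re; simp)+
      then have "Complex (-1) y \<notin> closure {z. \<phi> z \<noteq> 0}" "Complex 1 y \<notin> closure {z. \<phi> z \<noteq> 0}"
        using KB unfolding K_def by blast+
      then have "\<phi> (Complex (-1) y) = 0" "\<phi> (Complex 1 y) = 0" by (auto intro: outside_zero(1))
      then show "W (-1) = 0" "W 1 = 0" by (simp_all add: W_def)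
      show "\<And>t. t \<in> {-1<..<1} - {} \<Longrightarrow> (W has_real_derivative H (Complex t y)) (at t)" using D by simp
      show "H (Complex t y) = 0" if "t \<notin> {-1<..<1}" for t
      proof -
        have "Complex t y \<notin> B5" using that by (intro norm_ge_Re) auto
        then show ?thesis by (simp add: H_def)
      qed
    qed simp
  qed
  then have "integral\<^sup>L lborel (\<lambda>z. indicator Dst z * (px v z * \<phi> z))
      + integral\<^sup>L lborel (\<lambda>z. indicator B5 z * (v z * px \<phi> z)) = 0"
    using i1 i2 unfolding H_def by simp
  then show ?thesis unfolding set_lebesgue_integral_def by simp
qed

lemma dist_y:
  assumes tf: "test_fun B5 \<phi>"
  shows "(LINT z:B5|lborel. v z * py \<phi> z) = - (LINT z:Dst|lborel. py v z * \<phi> z)"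
proof -
  note P = test_fun_props[OF tf]
  define K where "K = closure {z. \<phi> z \<noteq> 0}"
  have KB: "K \<subseteq> B5" using P(5) by (simp add: K_def)
  define H where "H = (\<lambda>z. indicator Dst z * (py v z * \<phi> z) + indicator B5 z * (v z * py \<phi> z))"
  have i1: "integrable lborel (\<lambda>z. indicator Dst z * (py v z * \<phi> z))" by (rule I1_int[OF tf]) simp
  have i2: "integrable lborel (\<lambda>z. indicator B5 z * (v z * py \<phi> z))" by (rule I2_int[OF tf]) simp
  have iH: "integrable lborel H" unfolding H_def using i1 i2 by simp
  have "integral\<^sup>L lborel H = 0"
  proof (rule complex_fubini_zero_y[OF iH])
    fix y :: real assume y: "y \<noteq> 0"
    define W where "W = (\<lambda>t. v (Complex y t) * \<phi> (Complex y t))"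
    have D: "(W has_real_derivative H (Complex y t)) (at t)" for t
    proof (cases "Complex y t \<in> B5")
      case True
      then have z: "Complex y t \<in> PP" "Complex y t \<in> Dst" using y by (auto simp: complex_eq_iff)
      from DERIV_mult[OF v_line_y[OF z(1)] py_line[OF P(1)]]
      show ?thesis unfolding W_def
        by (rule DERIV_cong) (use z True in \<open>simp add: H_def py_v algebra_simps\<close>)
    next
      case False
      then have nK: "Complex y t \<notin> K" using KB by auto
      have o: "open {t. Complex y t \<in> - K}" unfolding K_def by (rule open_line_y, rule open_Compl, rule closed_closure)
      have "(W has_real_derivative 0) (at t)"
      proof (rule has_field_derivative_transform_within_open[OF _ o])
        show "((\<lambda>_. 0) has_real_derivative 0) (at t)" by simp
        show "t \<in> {t. Complex y t \<in> - K}" using nK by simp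
        fix x assume "x \<in> {t. Complex y t \<in> - K}"
        then have "Complex y x \<notin> closure {z. \<phi> z \<noteq> 0}" by (simp add: K_def)
        then have "\<phi> (Complex y x) = 0" by (rule outside_zero(1))
        then show "0 = W x" by (simp add: W_def)
      qed
      moreover have "H (Complex y t) = 0" using False by (simp add: H_def)
      ultimately show ?thesis by simp
    qed
    show "((\<lambda>t. H (Complex y t)) has_integral 0) UNIV"
    proof (rule ftc_line[where S="{}" and W=W])
      show "continuous_on {-1..1} W"
        by (intro continuous_at_imp_continuous_on ballI DERIV_isCont[OF D])
      have "Complex y (-1) \<notin> B5" "Complex y 1 \<notin> B5" by (intro norm_ge_Im; simp)+
      then have "Complex y (-1) \<notin> closure {z. \<phi> z \<noteq> 0}" "Complex y 1 \<notin> closure {z. \<phi> z \<noteq> 0}"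
        using KB unfolding K_def by blast+
      then have "\<phi> (Complex y (-1)) = 0" "\<phi> (Complex y 1) = 0" by (auto intro: outside_zero(1))
      then show "W (-1) = 0" "W 1 = 0" by (simp_all add: W_def)
      show "\<And>t. t \<in> {-1<..<1} - {} \<Longrightarrow> (W has_real_derivative H (Complex y t)) (at t)" using D by simp
      show "H (Complex y t) = 0" if "t \<notin> {-1<..<1}" for t
      proof -
        have "Complex y t \<notin> B5" using that by (intro norm_ge_Im) auto
        then show ?thesis by (simp add: H_def)
      qed
    qed simp
  qed
  then have "integral\<^sup>L lborel (\<lambda>z. indicator Dst z * (py v z * \<phi> z))
      + integral\<^sup>L lborel (\<lambda>z. indicator B5 z * (v z * py \<phi> z)) = 0"
    using i1 i2 unfolding H_def by simp
  then show ?thesis unfolding set_lebesgue_integral_def by simp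
qed

end

theorem lemma2p3:
  fixes u :: "complex \<Rightarrow> real" and v :: "complex \<Rightarrow> real"
  assumes smooth: "smooth_on (ball 0 (1/2) - {0}) u"
    and eq: "\<And>z. z \<in> ball 0 (1/2) - {0} \<Longrightarrow> laplacian u z = exp (2 * u z)"
    and v_def: "\<And>z. z \<in> ball 0 (1/2) - {0} \<Longrightarrow>
                  v z = u z + ln (norm z) + ln (- ln (norm z))"
    and v_cont: "continuous_on (ball 0 (1/2)) v"
  shows "set_integrable lborel (ball 0 (1/5) - {0}) (\<lambda>z. (px v z)\<^sup>2 + (py v z)\<^sup>2)
    \<and> (\<forall>\<phi>. test_fun (ball 0 (1/5)) \<phi> \<longrightarrow>
          set_integrable lborel (ball 0 (1/5) - {0}) (\<lambda>z. px v z * \<phi> z)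
        \<and> set_integrable lborel (ball 0 (1/5) - {0}) (\<lambda>z. py v z * \<phi> z)
        \<and> (LINT z:ball 0 (1/5)|lborel. v z * px \<phi> z)
            = - (LINT z:ball 0 (1/5) - {0}|lborel. px v z * \<phi> z)
        \<and> (LINT z:ball 0 (1/5)|lborel. v z * py \<phi> z)
            = - (LINT z:ball 0 (1/5) - {0}|lborel. py v z * \<phi> z))"
proof -
  interpret S: setting u v using smooth eq v_def v_cont by unfold_locales
  have 1: "set_integrable lborel (ball 0 (1/5) - {0}) (\<lambda>z. (px v z)\<^sup>2 + (py v z)\<^sup>2)"
    by (rule S.part1)
  have 2: "set_integrable lborel (ball 0 (1/5) - {0}) (\<lambda>z. px v z * \<phi> z)
        \<and> set_integrable lborel (ball 0 (1/5) - {0}) (\<lambda>z. py v z * \<phi> z)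
        \<and> (LINT z:ball 0 (1/5)|lborel. v z * px \<phi> z)
            = - (LINT z:ball 0 (1/5) - {0}|lborel. px v z * \<phi> z)
        \<and> (LINT z:ball 0 (1/5)|lborel. v z * py \<phi> z)
            = - (LINT z:ball 0 (1/5) - {0}|lborel. py v z * \<phi> z)"
    if tf: "test_fun (ball 0 (1/5)) \<phi>" for \<phi>
  proof (intro conjI)
    show "set_integrable lborel (ball 0 (1/5) - {0}) (\<lambda>z. px v z * \<phi> z)"
      using S.I1_int[OF tf, of "px v"] by (simp add: set_integrable_def)
    show "set_integrable lborel (ball 0 (1/5) - {0}) (\<lambda>z. py v z * \<phi> z)"
      using S.I1_int[OF tf, of "py v"] by (simp add: set_integrable_def)
    show "(LINT z:ball 0 (1/5)|lborel. v z * px \<phi> z)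
            = - (LINT z:ball 0 (1/5) - {0}|lborel. px v z * \<phi> z)"
      by (rule S.dist_x[OF tf])
    show "(LINT z:ball 0 (1/5)|lborel. v z * py \<phi> z)
            = - (LINT z:ball 0 (1/5) - {0}|lborel. py v z * \<phi> z)"
      by (rule S.dist_y[OF tf])
  qed
  show ?thesis using 1 2 by blast
qed

end
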